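(* Let $n\ge2$. Every $n$-qubit stabilizer unitary (any unitary implemented by a circuit over $\{\textsc{H},\textsc{P},\textsc{CNOT},\textsc{CZ}\}$) can be implemented, up to a global phase, by a circuit over the gate library $\{\textsc{P},\textsc{H},\textsc{CNOT}\}$ in which every $\textsc{CNOT}$ acts on adjacent qubits of a line (linear nearest neighbour architecture) and whose two-qubit depth is at most $14n-4$.
   Context: $\textsc{H}=\frac{1}{\sqrt2}\begin{pmatrix}1&1\\1&-1\end{pmatrix}$, $\textsc{P}=\mathrm{diag}(1,i)$ (powers $\textsc{P}^k$ allowed), $\textsc{CNOT}|a,b\rangle=|a,a\oplus b\rangle$, $\textsc{CZ}|a,b\rangle=(-1)^{ab}|a,b\rangle$. Linear nearest neighbour (LNN) architecture: qubits are arranged on a line $1,\dots,n$ and two-qubit gates may only act on qubits $j,j+1$. The two-qubit depth of a circuit is the minimum number of time steps needed to execute its two-qubit gates when each step consists of two-qubit gates on pairwise disjoint qubits; single-qubit gates are not counted. *)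

theory Defs
  imports Complex_Main
begin

text \<open>Gates on qubits indexed 0,1,2,... (qubit j of the paper is index j-1).
  Pgate q k is the k-th power of P on qubit q; CNOT c t has control c and target t.\<close>
datatype gate = Hgate nat | Pgate nat nat | CNOT nat nat | CZ nat nat

type_synonym state = "(nat \<Rightarrow> bool) \<Rightarrow> complex"

fun gate_sem :: "gate \<Rightarrow> state \<Rightarrow> state" where
  "gate_sem (Hgate q) \<psi> = (\<lambda>x. (\<psi> (x(q := False)) + (if x q then -1 else 1) * \<psi> (x(q := True)))
                                / complex_of_real (sqrt 2))"
| "gate_sem (Pgate q k) \<psi> = (\<lambda>x. (if x q then \<i> ^ k else 1) * \<psi> x)"
| "gate_sem (CNOT c t) \<psi> = (\<lambda>x. \<psi> (x(t := (x t \<noteq> x c))))"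
| "gate_sem (CZ a b) \<psi> = (\<lambda>x. (if x a \<and> x b then -1 else 1) * \<psi> x)"

fun circ_sem :: "gate list \<Rightarrow> state \<Rightarrow> state" where
  "circ_sem [] \<psi> = \<psi>"
| "circ_sem (g # gs) \<psi> = circ_sem gs (gate_sem g \<psi>)"

fun gate_wf :: "nat \<Rightarrow> gate \<Rightarrow> bool" where
  "gate_wf n (Hgate q) = (q < n)"
| "gate_wf n (Pgate q k) = (q < n)"
| "gate_wf n (CNOT c t) = (c < n \<and> t < n \<and> c \<noteq> t)"
| "gate_wf n (CZ a b) = (a < n \<and> b < n \<and> a \<noteq> b)"

definition circ_wf :: "nat \<Rightarrow> gate list \<Rightarrow> bool" where
  "circ_wf n C = (\<forall>g \<in> set C. gate_wf n g)"

fun lnn_phcnot_gate :: "gate \<Rightarrow> bool" where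
  "lnn_phcnot_gate (Hgate q) = True"
| "lnn_phcnot_gate (Pgate q k) = True"
| "lnn_phcnot_gate (CNOT c t) = (t = c + 1 \<or> c = t + 1)"
| "lnn_phcnot_gate (CZ a b) = False"

text \<open>Two-qubit depth by as-soon-as-possible scheduling: t q is the time step of the
  last two-qubit gate on qubit q so far, d the largest time step used.  ASAP scheduling attains the minimum number of steps.\<close>
fun tq_depth_aux :: "(nat \<Rightarrow> nat) \<Rightarrow> nat \<Rightarrow> gate list \<Rightarrow> nat" where
  "tq_depth_aux t d [] = d"
| "tq_depth_aux t d (CNOT a b # gs) =
     (let l = max (t a) (t b) + 1 in tq_depth_aux (t(a := l, b := l)) (max d l) gs)"
| "tq_depth_aux t d (CZ a b # gs) =
     (let l = max (t a) (t b) + 1 in tq_depth_aux (t(a := l, b := l)) (max d l) gs)"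
| "tq_depth_aux t d (Hgate q # gs) = tq_depth_aux t d gs"
| "tq_depth_aux t d (Pgate q k # gs) = tq_depth_aux t d gs"

definition two_qubit_depth :: "gate list \<Rightarrow> nat" where
  "two_qubit_depth C = tq_depth_aux (\<lambda>_. 0) 0 C"

end

theory Submission
  imports Defs
begin

datatype pl = PI | PX | PY | PZ

fun lc :: "pl \<Rightarrow> bool \<Rightarrow> complex" where
  "lc PI b = 1" | "lc PX b = 1" | "lc PZ b = (if b then -1 else 1)"
| "lc PY b = (if b then \<i> else - \<i>)"

fun fa :: "pl \<Rightarrow> bool" where
  "fa PI = False" | "fa PX = True" | "fa PY = True" | "fa PZ = False"

definition sig :: "pl \<Rightarrow> nat \<Rightarrow> state \<Rightarrow> state" where
  "sig a q \<psi> = (\<lambda>y. lc a (y q) * \<psi> (if fa a then y(q := \<not> y q) else y))"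

lemma sig_comm: "q \<noteq> r \<Longrightarrow> sig a q (sig b r \<psi>) = sig b r (sig a q \<psi>)"
  by (cases "fa a"; cases "fa b") (auto simp: sig_def fun_eq_iff fun_upd_twist)

fun hconj :: "pl \<Rightarrow> pl \<times> nat" where
  "hconj PI = (PI, 0)" | "hconj PX = (PZ, 0)" | "hconj PZ = (PX, 0)" | "hconj PY = (PY, 2)"
fun sconj :: "pl \<Rightarrow> pl \<times> nat" where
  "sconj PI = (PI, 0)" | "sconj PX = (PY, 0)" | "sconj PZ = (PZ, 0)" | "sconj PY = (PX, 2)"
fun cnconj :: "pl \<Rightarrow> pl \<Rightarrow> pl \<times> pl \<times> nat" where
  "cnconj PI PI = (PI, PI, 0)"
| "cnconj PI PX = (PI, PX, 0)"
| "cnconj PI PY = (PZ, PY, 0)"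
| "cnconj PI PZ = (PZ, PZ, 0)"
| "cnconj PX PI = (PX, PX, 0)"
| "cnconj PX PX = (PX, PI, 0)"
| "cnconj PX PY = (PY, PZ, 0)"
| "cnconj PX PZ = (PY, PY, 2)"
| "cnconj PY PI = (PY, PX, 0)"
| "cnconj PY PX = (PY, PI, 0)"
| "cnconj PY PY = (PX, PZ, 2)"
| "cnconj PY PZ = (PX, PY, 0)"
| "cnconj PZ PI = (PZ, PI, 0)"
| "cnconj PZ PX = (PZ, PX, 0)"
| "cnconj PZ PY = (PI, PY, 0)"
| "cnconj PZ PZ = (PI, PZ, 0)"

lemma i_pow_mod4: "\<i> ^ (k mod 4) = \<i> ^ k"
proof -
  have "\<i> ^ k = \<i> ^ (4 * (k div 4)) * \<i> ^ (k mod 4)"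
    by (metis div_mult_mod_eq power_add mult.commute)
  moreover have "\<i> ^ (4 * (k div 4)) = (1::complex)"
    by (simp add: power_mult)
  ultimately show ?thesis by simp
qed

lemma H_sig: "gate_sem (Hgate q) (sig a q \<psi>) =
   (\<lambda>y. \<i> ^ snd (hconj a) * sig (fst (hconj a)) q (gate_sem (Hgate q) \<psi>) y)"
  by (cases a) (auto simp: sig_def fun_eq_iff field_simps)

lemma S_sig: "gate_sem (Pgate q 1) (sig a q \<psi>) =
   (\<lambda>y. \<i> ^ snd (sconj a) * sig (fst (sconj a)) q (gate_sem (Pgate q 1) \<psi>) y)"
  by (cases a) (auto simp: sig_def fun_eq_iff field_simps)

lemma CN_sig: "c \<noteq> t \<Longrightarrow> gate_sem (CNOT c t) (sig a c (sig b t \<psi>)) =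
   (\<lambda>y. \<i> ^ snd (snd (cnconj a b)) * sig (fst (cnconj a b)) c (sig (fst (snd (cnconj a b))) t (gate_sem (CNOT c t) \<psi>)) y)"
  by (cases a; cases b) (auto simp: sig_def fun_eq_iff field_simps fun_upd_twist)


fun gq :: "gate \<Rightarrow> nat set" where
  "gq (Hgate q) = {q}" | "gq (Pgate q k) = {q}" | "gq (CNOT c t) = {c, t}" | "gq (CZ a b) = {a, b}"

lemma gate_sig_comm: "q \<notin> gq g \<Longrightarrow> gate_sem g (sig a q \<psi>) = sig a q (gate_sem g \<psi>)"
  by (cases g; cases "fa a") (auto simp: sig_def fun_eq_iff fun_upd_twist field_simps)

lemma gate_scal: "gate_sem g (\<lambda>y. c * \<psi> y) = (\<lambda>y. c * gate_sem g \<psi> y)"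
  by (cases g) (auto simp: fun_eq_iff field_simps)

fun popL :: "(nat \<Rightarrow> pl) \<Rightarrow> nat list \<Rightarrow> state \<Rightarrow> state" where
  "popL p [] \<psi> = \<psi>"
| "popL p (q # qs) \<psi> = sig (p q) q (popL p qs \<psi>)"

lemma gate_popL_comm: "set L \<inter> gq g = {} \<Longrightarrow> gate_sem g (popL p L \<psi>) = popL p L (gate_sem g \<psi>)"
  by (induction L) (auto simp: gate_sig_comm)

lemma sig_popL_comm: "q \<notin> set L \<Longrightarrow> sig a q (popL p L \<psi>) = popL p L (sig a q \<psi>)"
proof (induction L)
  case (Cons r L)
  then have "sig a q (sig (p r) r (popL p L \<psi>)) = sig (p r) r (sig a q (popL p L \<psi>))"
    by (intro sig_comm) auto
  then show ?case using Cons by simp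
qed simp

lemma popL_pull: "q \<in> set L \<Longrightarrow> distinct L \<Longrightarrow> popL p L \<psi> = sig (p q) q (popL p (remove1 q L) \<psi>)"
proof (induction L)
  case Nil then show ?case by simp
next
  case (Cons r L)
  show ?case
  proof (cases "r = q")
    case True then show ?thesis by simp
  next
    case False
    then have "popL p (r # L) \<psi> = sig (p r) r (sig (p q) q (popL p (remove1 q L) \<psi>))"
      using Cons by simp
    also have "\<dots> = sig (p q) q (sig (p r) r (popL p (remove1 q L) \<psi>))"
      using False by (simp add: sig_comm)
    finally show ?thesis using False by simp
  qed
qed

lemma popL_cong: "(\<And>q. q \<in> set L \<Longrightarrow> p q = p' q) \<Longrightarrow> popL p L \<psi> = popL p' L \<psi>"
  by (induction L) auto

lemma sig_PI: "sig PI q \<psi> = \<psi>"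
  by (simp add: sig_def)

lemma popL_PI: "(\<And>q. q \<in> set L \<Longrightarrow> p q = PI) \<Longrightarrow> popL p L \<psi> = \<psi>"
  by (induction L) (auto simp: sig_PI)

type_synonym pauli = "nat \<times> (nat \<Rightarrow> pl)"

definition pop :: "nat \<Rightarrow> pauli \<Rightarrow> state \<Rightarrow> state" where
  "pop n P \<psi> = (\<lambda>y. \<i> ^ fst P * popL (snd P) [0..<n] \<psi> y)"

definition hP :: "nat \<Rightarrow> pauli \<Rightarrow> pauli" where
  "hP q P = ((fst P + snd (hconj (snd P q))) mod 4, (snd P)(q := fst (hconj (snd P q))))"
definition sP :: "nat \<Rightarrow> pauli \<Rightarrow> pauli" where
  "sP q P = ((fst P + snd (sconj (snd P q))) mod 4, (snd P)(q := fst (sconj (snd P q))))"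
definition cnP :: "nat \<Rightarrow> nat \<Rightarrow> pauli \<Rightarrow> pauli" where
  "cnP c t P = ((fst P + snd (snd (cnconj (snd P c) (snd P t)))) mod 4,
     (snd P)(c := fst (cnconj (snd P c) (snd P t)), t := fst (snd (cnconj (snd P c) (snd P t)))))"

fun conjg :: "gate \<Rightarrow> pauli \<Rightarrow> pauli" where
  "conjg (Hgate q) P = hP q P"
| "conjg (Pgate q k) P = (sP q ^^ k) P"
| "conjg (CNOT c t) P = cnP c t P"
| "conjg (CZ a b) P = hP b (cnP a b (hP b P))"

fun conjc :: "gate list \<Rightarrow> pauli \<Rightarrow> pauli" where
  "conjc [] P = P"
| "conjc (g # gs) P = conjc gs (conjg g P)"

lemma conjc_append: "conjc (A @ B) P = conjc B (conjc A P)"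
  by (induction A arbitrary: P) auto

lemma pop_1q:
  assumes q: "q < n"
    and gs: "\<And>a \<psi>. gate_sem g (sig a q \<psi>) = (\<lambda>y. \<i> ^ snd (f a) * sig (fst (f a)) q (gate_sem g \<psi>) y)"
    and gq: "gq g = {q}"
  shows "gate_sem g (pop n P \<psi>) = pop n ((fst P + snd (f (snd P q))) mod 4, (snd P)(q := fst (f (snd P q)))) (gate_sem g \<psi>)"
proof -
  obtain e p where P: "P = (e, p)" by (cases P)
  obtain a ph where f: "f (p q) = (a, ph)" by (cases "f (p q)")
  let ?L = "[0..<n]" let ?L' = "remove1 q [0..<n]"
  have qL: "q \<in> set ?L" using q by simp
  have dj: "set ?L' \<inter> gq g = {}" using gq by auto
  have "gate_sem g (pop n P \<psi>) = (\<lambda>y. \<i> ^ e * gate_sem g (sig (p q) q (popL p ?L' \<psi>)) y)"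
    unfolding pop_def P using popL_pull[OF qL] by (simp add: gate_scal)
  also have "\<dots> = (\<lambda>y. \<i> ^ e * (\<i> ^ ph * sig a q (popL p ?L' (gate_sem g \<psi>)) y))"
    using gs[of "p q"] f gate_popL_comm[OF dj] by simp
  also have "\<dots> = pop n ((e + ph) mod 4, p(q := a)) (gate_sem g \<psi>)"
  proof -
    have "popL (p(q:=a)) ?L' \<phi> = popL p ?L' \<phi>" for \<phi>
      by (rule popL_cong) auto
    then have eq: "popL (p(q := a)) ?L \<phi> = sig a q (popL p ?L' \<phi>)" for \<phi>
      using popL_pull[OF qL, of "p(q:=a)"] by simp
    show ?thesis unfolding pop_def
      by (simp add: eq fun_eq_iff i_pow_mod4 power_add)
  qed
  finally show ?thesis using P f by simp
qed

lemma pop_H: "q < n \<Longrightarrow> gate_sem (Hgate q) (pop n P \<psi>) = pop n (hP q P) (gate_sem (Hgate q) \<psi>)"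
  unfolding hP_def apply (rule pop_1q) apply assumption apply (rule H_sig) by simp

lemma pop_S: "q < n \<Longrightarrow> gate_sem (Pgate q 1) (pop n P \<psi>) = pop n (sP q P) (gate_sem (Pgate q 1) \<psi>)"
  unfolding sP_def apply (rule pop_1q) apply assumption apply (rule S_sig) by simp

lemma Pgate_Suc: "gate_sem (Pgate q (Suc k)) \<psi> = gate_sem (Pgate q 1) (gate_sem (Pgate q k) \<psi>)"
  by (auto simp: fun_eq_iff)

lemma Pgate_0: "gate_sem (Pgate q 0) \<psi> = \<psi>"
  by (auto simp: fun_eq_iff)

lemma pop_P: "q < n \<Longrightarrow> gate_sem (Pgate q k) (pop n P \<psi>) = pop n ((sP q ^^ k) P) (gate_sem (Pgate q k) \<psi>)"
proof (induction k arbitrary: P)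
  case 0 then show ?case by (simp del: gate_sem.simps add: Pgate_0)
next
  case (Suc k)
  have "gate_sem (Pgate q (Suc k)) (pop n P \<psi>) = gate_sem (Pgate q 1) (gate_sem (Pgate q k) (pop n P \<psi>))"
    by (rule Pgate_Suc)
  also have "\<dots> = gate_sem (Pgate q 1) (pop n ((sP q ^^ k) P) (gate_sem (Pgate q k) \<psi>))"
    using Suc by simp
  also have "\<dots> = pop n (sP q ((sP q ^^ k) P)) (gate_sem (Pgate q 1) (gate_sem (Pgate q k) \<psi>))"
    using Suc.prems by (rule pop_S)
  also have "\<dots> = pop n ((sP q ^^ Suc k) P) (gate_sem (Pgate q (Suc k)) \<psi>)"
    by (simp only: Pgate_Suc funpow.simps comp_def)
  finally show ?case .
qed

lemma pop_CN:
  assumes c: "c < n" and t: "t < n" and ct: "c \<noteq> t"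
  shows "gate_sem (CNOT c t) (pop n P \<psi>) = pop n (cnP c t P) (gate_sem (CNOT c t) \<psi>)"
proof -
  obtain e p where P: "P = (e, p)" by (cases P)
  obtain a b ph where f: "cnconj (p c) (p t) = (a, b, ph)" by (cases "cnconj (p c) (p t)")
  let ?L = "[0..<n]" let ?L' = "remove1 t (remove1 c [0..<n])"
  have cL: "c \<in> set ?L" using c by simp
  have tL: "t \<in> set (remove1 c ?L)" using t ct by simp
  have dis: "distinct (remove1 c ?L)" by (simp add: distinct_remove1)
  have pull: "popL p' ?L \<phi> = sig (p' c) c (sig (p' t) t (popL p' ?L' \<phi>))" for p' \<phi>
    using popL_pull[OF cL, of p'] popL_pull[OF tL dis, of p'] by simp
  have dj: "set ?L' \<inter> gq (CNOT c t) = {}"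
    by (auto simp: set_remove1_eq distinct_remove1)
  have "gate_sem (CNOT c t) (pop n P \<psi>) = (\<lambda>y. \<i> ^ e * gate_sem (CNOT c t) (sig (p c) c (sig (p t) t (popL p ?L' \<psi>))) y)"
    unfolding pop_def P using pull by (simp add: gate_scal)
  also have "\<dots> = (\<lambda>y. \<i> ^ e * (\<i> ^ ph * sig a c (sig b t (popL p ?L' (gate_sem (CNOT c t) \<psi>))) y))"
    using CN_sig[OF ct, of "p c" "p t"] f gate_popL_comm[OF dj] by simp
  also have "\<dots> = pop n ((e + ph) mod 4, p(c := a, t := b)) (gate_sem (CNOT c t) \<psi>)"
  proof -
    have "popL (p(c := a, t := b)) ?L' \<phi> = popL p ?L' \<phi>" for \<phi>
      by (rule popL_cong) (auto simp: set_remove1_eq distinct_remove1)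
    then have eq: "popL (p(c := a, t := b)) ?L \<phi> = sig a c (sig b t (popL p ?L' \<phi>))" for \<phi>
      using pull[of "p(c := a, t := b)"] ct by simp
    show ?thesis unfolding pop_def
      by (simp add: eq fun_eq_iff i_pow_mod4 power_add)
  qed
  finally show ?thesis using P f by (simp add: cnP_def)
qed

lemma sqrt2c: "complex_of_real (sqrt 2) * complex_of_real (sqrt 2) = 2"
proof -
  have "complex_of_real (sqrt 2) * complex_of_real (sqrt 2) = complex_of_real (sqrt 2 * sqrt 2)"
    by (simp only: of_real_mult)
  also have "sqrt 2 * sqrt 2 = (2::real)" by simp
  finally show ?thesis by simp
qed

lemma CZ_decomp: "a \<noteq> b \<Longrightarrow> gate_sem (CZ a b) \<psi> = gate_sem (Hgate b) (gate_sem (CNOT a b) (gate_sem (Hgate b) \<psi>))"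
  by (auto simp: fun_eq_iff field_simps fun_upd_twist sqrt2c fun_upd_idem)


lemma pop_gate: "gate_wf n g \<Longrightarrow> gate_sem g (pop n P \<psi>) = pop n (conjg g P) (gate_sem g \<psi>)"
  by (cases g) (simp_all del: gate_sem.simps add: pop_H pop_P pop_CN CZ_decomp)

lemma pop_circ: "circ_wf n C \<Longrightarrow> circ_sem C (pop n P \<psi>) = pop n (conjc C P) (circ_sem C \<psi>)"
proof (induction C arbitrary: P \<psi>)
  case Nil then show ?case by simp
next
  case (Cons g C)
  then have wf: "gate_wf n g" "circ_wf n C" by (auto simp: circ_wf_def)
  show ?case using Cons.IH[OF wf(2)] pop_gate[OF wf(1)] by simp
qed

lemma hP_out: "r \<noteq> q \<Longrightarrow> snd (hP q P) r = snd P r"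
  by (simp add: hP_def split: prod.splits)
lemma sP_out: "r \<noteq> q \<Longrightarrow> snd (sP q P) r = snd P r"
  by (simp add: sP_def split: prod.splits)
lemma sPk_out: "r \<noteq> q \<Longrightarrow> snd ((sP q ^^ k) P) r = snd P r"
  by (induction k) (auto simp: sP_out)
lemma cnP_out: "r \<noteq> c \<Longrightarrow> r \<noteq> t \<Longrightarrow> snd (cnP c t P) r = snd P r"
  by (simp add: cnP_def split: prod.splits)

lemma conjg_out: "r \<notin> gq g \<Longrightarrow> snd (conjg g P) r = snd P r"
  by (cases g) (auto simp: hP_out sPk_out cnP_out)

lemma conjc_out: "(\<forall>g\<in>set G. r \<notin> gq g) \<Longrightarrow> snd (conjc G P) r = snd P r"
  by (induction G arbitrary: P) (auto simp: conjg_out)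

lemma hP_lt4: "fst (hP q P) < 4" by (simp add: hP_def split: prod.splits)
lemma sP_lt4: "fst (sP q P) < 4" by (simp add: sP_def split: prod.splits)
lemma cnP_lt4: "fst (cnP c t P) < 4" by (simp add: cnP_def split: prod.splits)
lemma sPk_lt4: "fst P < 4 \<Longrightarrow> fst ((sP q ^^ k) P) < 4"
  by (induction k) (auto simp: sP_lt4)
lemma conjg_lt4: "fst P < 4 \<Longrightarrow> fst (conjg g P) < 4"
  by (cases g) (auto simp: hP_lt4 sPk_lt4 cnP_lt4)
lemma conjc_lt4: "fst P < 4 \<Longrightarrow> fst (conjc G P) < 4"
  by (induction G arbitrary: P) (auto simp: conjg_lt4)

lemma even_mod4: "even e \<Longrightarrow> even ph \<Longrightarrow> even ((e + ph) mod (4::nat))"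
  by (metis dvd_add even_mod_4_div_2 odd_iff_mod_2_eq_one mod_mod_cancel mod_add_eq
      dvd_mod_iff even_numeral)

lemma hconj_even: "even (snd (hconj a))" by (cases a) auto
lemma sconj_even: "even (snd (sconj a))" by (cases a) auto
lemma cnconj_even: "even (snd (snd (cnconj a b)))" by (cases a; cases b) auto

lemma hP_even: "even (fst P) \<Longrightarrow> even (fst (hP q P))"
  using hconj_even[of "snd P q"] by (auto simp: hP_def split: prod.splits intro: even_mod4)
lemma sP_even: "even (fst P) \<Longrightarrow> even (fst (sP q P))"
  using sconj_even[of "snd P q"] by (auto simp: sP_def split: prod.splits intro: even_mod4)
lemma cnP_even: "even (fst P) \<Longrightarrow> even (fst (cnP c t P))"
  using cnconj_even[of "snd P c" "snd P t"] by (auto simp: cnP_def split: prod.splits intro: even_mod4)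
lemma sPk_even: "even (fst P) \<Longrightarrow> even (fst ((sP q ^^ k) P))"
  by (induction k) (auto simp: sP_even)
lemma conjg_even: "even (fst P) \<Longrightarrow> even (fst (conjg g P))"
  by (cases g) (auto simp: hP_even sPk_even cnP_even)
lemma conjc_even: "even (fst P) \<Longrightarrow> even (fst (conjc G P))"
  by (induction G arbitrary: P) (auto simp: conjg_even)

lemma hP_id: "snd P q = PI \<Longrightarrow> fst P < 4 \<Longrightarrow> hP q P = P"
  by (cases P) (auto simp: hP_def)
lemma sP_id: "snd P q = PI \<Longrightarrow> fst P < 4 \<Longrightarrow> sP q P = P"
  by (cases P) (auto simp: sP_def)
lemma sPk_id: "snd P q = PI \<Longrightarrow> fst P < 4 \<Longrightarrow> (sP q ^^ k) P = P"
  by (induction k) (auto simp: sP_id)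
lemma cnP_id: "snd P c = PI \<Longrightarrow> snd P t = PI \<Longrightarrow> fst P < 4 \<Longrightarrow> cnP c t P = P"
  by (cases P) (auto simp: cnP_def fun_upd_idem)
lemma conjg_id: "(\<forall>q\<in>gq g. snd P q = PI) \<Longrightarrow> fst P < 4 \<Longrightarrow> conjg g P = P"
  by (cases g) (auto simp: hP_id sPk_id cnP_id)
lemma conjc_id: "(\<forall>g\<in>set G. \<forall>q\<in>gq g. snd P q = PI) \<Longrightarrow> fst P < 4 \<Longrightarrow> conjc G P = P"
  by (induction G) (auto simp: conjg_id)

definition supp :: "nat \<Rightarrow> pauli \<Rightarrow> bool" where
  "supp n P = (\<forall>q\<ge>n. snd P q = PI)"

lemma gq_wf: "gate_wf n g \<Longrightarrow> q \<in> gq g \<Longrightarrow> q < n"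
  by (cases g) auto

lemma conjc_supp: "circ_wf n G \<Longrightarrow> supp n P \<Longrightarrow> supp n (conjc G P)"
  unfolding supp_def circ_wf_def
  by (metis conjc_out gq_wf not_le)

definition anti :: "pl \<Rightarrow> pl \<Rightarrow> bool" where
  "anti a b = (a \<noteq> PI \<and> b \<noteq> PI \<and> a \<noteq> b)"

definition sympl :: "nat \<Rightarrow> pauli \<Rightarrow> pauli \<Rightarrow> bool" where
  "sympl n P Q = odd (\<Sum>q<n. if anti (snd P q) (snd Q q) then 1 else (0::nat))"

lemma anti_hconj: "anti (fst (hconj a)) (fst (hconj b)) = anti a b"
  by (cases a; cases b) (auto simp: anti_def)
lemma anti_sconj: "anti (fst (sconj a)) (fst (sconj b)) = anti a b"
  by (cases a; cases b) (auto simp: anti_def)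
lemma anti_cnconj: "odd ((if anti (fst (cnconj a1 a2)) (fst (cnconj b1 b2)) then 1 else 0) +
     (if anti (fst (snd (cnconj a1 a2))) (fst (snd (cnconj b1 b2))) then 1 else (0::nat)))
   = odd ((if anti a1 b1 then 1 else 0) + (if anti a2 b2 then 1 else (0::nat)))"
  by (cases a1; cases a2; cases b1; cases b2) (simp_all add: anti_def)

lemma sympl_1q:
  assumes "\<And>r. r \<noteq> q \<Longrightarrow> snd P' r = snd P r" "\<And>r. r \<noteq> q \<Longrightarrow> snd Q' r = snd Q r"
    "anti (snd P' q) (snd Q' q) = anti (snd P q) (snd Q q)"
  shows "sympl n P' Q' = sympl n P Q"
  unfolding sympl_def
  by (rule arg_cong[where f=odd], rule sum.cong) (use assms in \<open>auto split: if_splits\<close>, metis+)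

lemma sum_split2: "c < n \<Longrightarrow> t < n \<Longrightarrow> c \<noteq> t \<Longrightarrow>
  (\<Sum>q<n. f q) = f c + f t + (\<Sum>q\<in>{..<n} - {c} - {t}. f q)" for f :: "nat \<Rightarrow> nat"
  by (simp add: sum.remove[of "{..<n}" c] sum.remove[of "{..<n}-{c}" t])

lemma sympl_hP: "sympl n (hP q P) (hP q Q) = sympl n P Q"
  by (rule sympl_1q[where q=q]) (auto simp: hP_out hP_def anti_hconj)

lemma sympl_sP: "sympl n (sP q P) (sP q Q) = sympl n P Q"
  by (rule sympl_1q[where q=q]) (auto simp: sP_out sP_def anti_sconj)

lemma sympl_sPk: "sympl n ((sP q ^^ k) P) ((sP q ^^ k) Q) = sympl n P Q"
  by (induction k) (auto simp: sympl_sP)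

lemma sympl_cnP:
  assumes "c < n" "t < n" "c \<noteq> t"
  shows "sympl n (cnP c t P) (cnP c t Q) = sympl n P Q"
proof -
  let ?f = "\<lambda>P Q q. if anti (snd P q) (snd Q q) then 1 else (0::nat)"
  have rest: "(\<Sum>q\<in>{..<n} - {c} - {t}. ?f (cnP c t P) (cnP c t Q) q) = (\<Sum>q\<in>{..<n} - {c} - {t}. ?f P Q q)"
    by (rule sum.cong) (auto simp: cnP_out)
  have loc: "odd (?f (cnP c t P) (cnP c t Q) c + ?f (cnP c t P) (cnP c t Q) t) = odd (?f P Q c + ?f P Q t)"
    using anti_cnconj[of "snd P c" "snd P t" "snd Q c" "snd Q t"] assms(3)
    by (simp add: cnP_def)
  have par: "odd (x + y + R) = odd (x' + y' + R)" if "odd (x + y) = odd (x' + y')" for x y x' y' R :: nat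
    using that by auto
  show ?thesis unfolding sympl_def
    apply (subst sum_split2[OF assms, of "?f (cnP c t P) (cnP c t Q)"])
    apply (subst sum_split2[OF assms, of "?f P Q"])
    unfolding rest by (rule par[OF loc])
qed

lemma sympl_conjg: "gate_wf n g \<Longrightarrow> sympl n (conjg g P) (conjg g Q) = sympl n P Q"
  by (cases g) (auto simp: sympl_hP sympl_sPk sympl_cnP)

lemma sympl_conjc: "circ_wf n G \<Longrightarrow> sympl n (conjc G P) (conjc G Q) = sympl n P Q"
  by (induction G arbitrary: P Q) (auto simp: circ_wf_def sympl_conjg)


definition toZ :: "nat \<Rightarrow> pl \<Rightarrow> gate list" where
  "toZ q a = (case a of PX \<Rightarrow> [Hgate q] | PY \<Rightarrow> [Pgate q 1, Hgate q] | _ \<Rightarrow> [])"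
definition toX :: "nat \<Rightarrow> pl \<Rightarrow> gate list" where
  "toX q a = (case a of PZ \<Rightarrow> [Hgate q] | PY \<Rightarrow> [Pgate q 1] | _ \<Rightarrow> [])"

definition linkop :: "nat \<Rightarrow> pl \<Rightarrow> pl \<Rightarrow> gate list" where
  "linkop j a b = (if b = PI then toZ j a @ [CNOT j (Suc j), Hgate j, CNOT (Suc j) j]
     else if a = PI then toZ (Suc j) b @ [CNOT j (Suc j), CNOT (Suc j) j]
     else toX j a @ toX (Suc j) b @ [CNOT j (Suc j), CNOT (Suc j) j])"

lemma linkop_clear: "snd (conjc (linkop j (snd P j) (snd P (Suc j))) P) (Suc j) = PI"
proof -
  obtain e p where P: "P = (e, p)" by (cases P)
  show ?thesis unfolding P
    by (cases "p j"; cases "p (Suc j)")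
       (simp_all add: linkop_def toZ_def toX_def hP_def sP_def cnP_def)
qed


definition okg :: "nat \<Rightarrow> nat \<Rightarrow> gate \<Rightarrow> bool" where
  "okg lo hi g = (lnn_phcnot_gate g \<and> gq g \<subseteq> {lo..hi})"

lemma okg_mono: "okg lo hi g \<Longrightarrow> lo' \<le> lo \<Longrightarrow> hi \<le> hi' \<Longrightarrow> okg lo' hi' g"
  by (auto simp: okg_def)

lemma okg_wf: "okg lo hi g \<Longrightarrow> hi < n \<Longrightarrow> gate_wf n g"
  by (cases g) (auto simp: okg_def)

lemma toZ_ok: "lo \<le> q \<Longrightarrow> q \<le> hi \<Longrightarrow> g \<in> set (toZ q a) \<Longrightarrow> okg lo hi g"
  by (cases a) (auto simp: toZ_def okg_def)
lemma toX_ok: "lo \<le> q \<Longrightarrow> q \<le> hi \<Longrightarrow> g \<in> set (toX q a) \<Longrightarrow> okg lo hi g"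
  by (cases a) (auto simp: toX_def okg_def)

lemma linkop_ok: "g \<in> set (linkop j a b) \<Longrightarrow> okg j (Suc j) g"
  by (cases a; cases b) (auto simp: linkop_def toZ_def toX_def okg_def)

fun sw :: "nat \<Rightarrow> nat \<Rightarrow> pauli \<Rightarrow> gate list" where
  "sw lo 0 P = []"
| "sw lo (Suc m) P = (let G = linkop (lo + m) (snd P (lo + m)) (snd P (Suc (lo + m)))
     in G @ sw lo m (conjc G P))"

lemma sw_ok: "g \<in> set (sw lo m P) \<Longrightarrow> okg lo (lo + m) g"
proof (induction m arbitrary: P)
  case 0 then show ?case by simp
next
  case (Suc m)
  define G where "G = linkop (lo + m) (snd P (lo + m)) (snd P (Suc (lo + m)))"
  have "g \<in> set G \<or> g \<in> set (sw lo m (conjc G P))" using Suc.prems by (simp add: Let_def G_def)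
  then show ?case
  proof
    assume "g \<in> set G"
    then have "okg (lo + m) (Suc (lo + m)) g" using linkop_ok G_def by simp
    then show ?thesis by (rule okg_mono) auto
  next
    assume "g \<in> set (sw lo m (conjc G P))"
    then have "okg lo (lo + m) g" using Suc.IH by simp
    then show ?thesis by (rule okg_mono) auto
  qed
qed

lemma okg_out: "(\<forall>g\<in>set G. okg lo hi g) \<Longrightarrow> (q < lo \<or> hi < q) \<Longrightarrow> snd (conjc G P) q = snd P q"
  by (rule conjc_out) (fastforce simp: okg_def subset_iff)

lemma sw_clear:
  "(\<forall>q. lo + m < q \<longrightarrow> snd P q = PI) \<Longrightarrow> lo < q \<Longrightarrow> snd (conjc (sw lo m P) P) q = PI"
proof (induction m arbitrary: P)
  case 0 then show ?case by simp
next
  case (Suc m)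
  define G where "G = linkop (lo + m) (snd P (lo + m)) (snd P (Suc (lo + m)))"
  have okG: "\<forall>g\<in>set G. okg (lo + m) (Suc (lo + m)) g" using linkop_ok G_def by auto
  have "\<forall>q. lo + m < q \<longrightarrow> snd (conjc G P) q = PI"
  proof (intro allI impI)
    fix r assume r: "lo + m < r"
    show "snd (conjc G P) r = PI"
    proof (cases "r = Suc (lo + m)")
      case True then show ?thesis using linkop_clear G_def by simp
    next
      case False
      then have "snd (conjc G P) r = snd P r" using okg_out[OF okG] r by auto
      then show ?thesis using Suc.prems r False by auto
    qed
  qed
  from Suc.IH[OF this Suc.prems(2)] show ?case by (simp add: G_def[symmetric] conjc_append Let_def)
qed


definition finlink :: "nat \<Rightarrow> pauli \<Rightarrow> pauli \<Rightarrow> gate list" where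
  "finlink k P Q = (let G1 = toZ k (snd P k) @ toZ (Suc k) (snd Q (Suc k)) @ [CNOT k (Suc k)];
     Q1 = conjc G1 Q in G1 @ toX (Suc k) (snd Q1 (Suc k)) @ [CNOT k (Suc k)])"

lemma finlink_ok: "g \<in> set (finlink k P Q) \<Longrightarrow> okg k (Suc k) g"
  by (cases "snd P k"; cases "snd Q (Suc k)"; cases "snd (conjc (toZ k (snd P k) @ toZ (Suc k) (snd Q (Suc k)) @ [CNOT k (Suc k)]) Q) (Suc k)")
     (auto simp: finlink_def toZ_def toX_def okg_def Let_def)

lemma finlink_res:
  assumes "anti (snd P k) (snd Q k)" "snd P (Suc k) = PI"
  shows "snd (conjc (finlink k P Q) P) k = PZ \<and> snd (conjc (finlink k P Q) P) (Suc k) = PI \<and>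
         snd (conjc (finlink k P Q) Q) (Suc k) = PI \<and> snd (conjc (finlink k P Q) Q) k \<in> {PX, PY}"
proof -
  obtain e p where P: "P = (e, p)" by (cases P)
  obtain f r where Q: "Q = (f, r)" by (cases Q)
  show ?thesis using assms unfolding P Q
    by (cases "p k"; cases "r k"; cases "r (Suc k)")
       (simp_all add: anti_def finlink_def Let_def toZ_def toX_def hP_def sP_def cnP_def)
qed

definition finfix :: "nat \<Rightarrow> pauli \<Rightarrow> pauli \<Rightarrow> gate list" where
  "finfix k P Q = (let G1 = (if snd Q k = PY then [Pgate k 3] else []) @ [Hgate k];
     P1 = conjc G1 P; Q1 = conjc G1 Q;
     G2 = (if fst P1 = 2 then [Pgate k 2] else []);
     Q2 = conjc G2 Q1;
     G3 = (if fst Q2 = 2 then [Hgate k, Pgate k 2, Hgate k] else [])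
   in G1 @ G2 @ G3)"

lemma finfix_ok: "g \<in> set (finfix k P Q) \<Longrightarrow> okg k k g"
  by (auto simp: finfix_def Let_def okg_def split: if_splits)

lemma sP2: "(sP q ^^ 2) P = sP q (sP q P)" by (simp add: numeral_2_eq_2)
lemma sP3: "(sP q ^^ 3) P = sP q (sP q (sP q P))" by (simp add: numeral_3_eq_3)

definition PXq :: "nat \<Rightarrow> pauli" where "PXq k = (0, (\<lambda>_. PI)(k := PX))"
definition PZq :: "nat \<Rightarrow> pauli" where "PZq k = (0, (\<lambda>_. PI)(k := PZ))"

lemma finfix_res:
  assumes "e = 0 \<or> e = 2" "f = 0 \<or> f = 2" "c = PX \<or> c = PY"
  shows "conjc (finfix k (e, (\<lambda>_. PI)(k := PZ)) (f, (\<lambda>_. PI)(k := c))) (e, (\<lambda>_. PI)(k := PZ)) = PXq k \<and>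
         conjc (finfix k (e, (\<lambda>_. PI)(k := PZ)) (f, (\<lambda>_. PI)(k := c))) (f, (\<lambda>_. PI)(k := c)) = PZq k"
  using assms
  by (elim disjE; simp add: finfix_def Let_def sP2 sP3 del: funpow.simps; simp add: hP_def sP_def PXq_def PZq_def)


lemma toZ_res:
  assumes "anti (snd P k) (snd Q k)"
  shows "snd (conjc (toZ k (snd P k)) P) k = PZ \<and> snd (conjc (toZ k (snd P k)) Q) k \<in> {PX, PY}"
proof -
  obtain e p where P: "P = (e, p)" by (cases P)
  obtain f r where Q: "Q = (f, r)" by (cases Q)
  show ?thesis using assms unfolding P Q
    by (cases "p k"; cases "r k") (simp_all add: anti_def toZ_def hP_def sP_def)
qed

definition stage :: "nat \<Rightarrow> nat \<Rightarrow> pauli \<Rightarrow> pauli \<Rightarrow> gate list" where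
  "stage n k P Q = (if Suc k < n then
     (let S1 = sw k (n - 1 - k) P; P1 = conjc S1 P; Q1 = conjc S1 Q;
          S2 = sw (Suc k) (n - 2 - k) Q1; P2 = conjc S2 P1; Q2 = conjc S2 Q1;
          S3 = finlink k P2 Q2; P3 = conjc S3 P2; Q3 = conjc S3 Q2
      in S1 @ S2 @ S3 @ finfix k P3 Q3)
   else (let S1 = toZ k (snd P k) in S1 @ finfix k (conjc S1 P) (conjc S1 Q)))"

lemma stage_ok: "k < n \<Longrightarrow> g \<in> set (stage n k P Q) \<Longrightarrow> okg k (n - 1) g"
proof -
  assume k: "k < n" and g: "g \<in> set (stage n k P Q)"
  show ?thesis
  proof (cases "Suc k < n")
    case True
    have e1: "k + (n - 1 - k) = n - 1" "Suc k + (n - 2 - k) = n - 1" using True by arith+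
    show ?thesis using g True unfolding stage_def Let_def
      by (auto dest!: sw_ok finlink_ok finfix_ok simp: e1 elim!: okg_mono)
  next
    case False
    then have "n - 1 = k" using k by arith
    have "g \<in> set (toZ k (snd P k)) \<or> g \<in> set (finfix k (conjc (toZ k (snd P k)) P) (conjc (toZ k (snd P k)) Q))"
      using g False unfolding stage_def Let_def by auto
    then show ?thesis using \<open>n - 1 = k\<close> toZ_ok[of k k k] finfix_ok by (metis order_refl)
  qed
qed

lemma single_eq: "(\<forall>q. q \<noteq> k \<longrightarrow> snd P q = PI) \<Longrightarrow> P = (fst P, (\<lambda>_. PI)(k := snd P k))"
  by (cases P) (auto simp: fun_eq_iff)

lemma sympl_single: "k < n \<Longrightarrow> (\<forall>q. q \<noteq> k \<longrightarrow> snd P q = PI) \<Longrightarrow> sympl n P Q = anti (snd P k) (snd Q k)"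
proof -
  assume k: "k < n" and s: "\<forall>q. q \<noteq> k \<longrightarrow> snd P q = PI"
  have "(\<Sum>q<n. if anti (snd P q) (snd Q q) then 1 else (0::nat)) =
        (\<Sum>q<n. if q = k then (if anti (snd P k) (snd Q k) then 1 else 0) else 0)"
    by (rule sum.cong) (use s in \<open>auto simp: anti_def\<close>)
  also have "\<dots> = (if anti (snd P k) (snd Q k) then 1 else 0)" using k by simp
  finally show ?thesis by (simp add: sympl_def)
qed

lemma even_lt4: "even (e::nat) \<Longrightarrow> e < 4 \<Longrightarrow> e = 0 \<or> e = 2"
  by presburger

lemma okl_wf: "(\<forall>g\<in>set G. okg lo hi g) \<Longrightarrow> hi < n \<Longrightarrow> circ_wf n G"
  by (auto simp: circ_wf_def intro: okg_wf)

lemma stage_res: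
  assumes k: "k < n" and sP: "supp n P" and sQ: "supp n Q"
    and low: "\<forall>j<k. snd P j = PI \<and> snd Q j = PI" and sy: "sympl n P Q"
    and ev: "even (fst P)" "even (fst Q)" and lt: "fst P < 4" "fst Q < 4"
  shows "conjc (stage n k P Q) P = PXq k \<and> conjc (stage n k P Q) Q = PZq k"
proof (cases "Suc k < n")
  case True
  define S1 where "S1 = sw k (n - 1 - k) P"
  define P1 where "P1 = conjc S1 P"
  define Q1 where "Q1 = conjc S1 Q"
  define S2 where "S2 = sw (Suc k) (n - 2 - k) Q1"
  define P2 where "P2 = conjc S2 P1"
  define Q2 where "Q2 = conjc S2 Q1"
  define S3 where "S3 = finlink k P2 Q2"
  define P3 where "P3 = conjc S3 P2"
  define Q3 where "Q3 = conjc S3 Q2"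
  have st: "stage n k P Q = S1 @ S2 @ S3 @ finfix k P3 Q3"
    using True by (simp add: stage_def Let_def S1_def P1_def Q1_def S2_def P2_def Q2_def S3_def P3_def Q3_def)
  have ok1: "\<forall>g\<in>set S1. okg k (n - 1) g" using sw_ok[of _ k "n - 1 - k" P] True S1_def by auto
  have e2: "Suc k + (n - 2 - k) = n - 1" using True by arith
  have ok2: "\<forall>g\<in>set S2. okg (Suc k) (n - 1) g" using sw_ok[of _ "Suc k" "n - 2 - k" Q1] S2_def
    unfolding e2 by auto
  have ok3: "\<forall>g\<in>set S3. okg k (Suc k) g" using finlink_ok S3_def by auto
  have wf1: "circ_wf n S1" using okl_wf[OF ok1] k by simp
  have wf2: "circ_wf n S2" using okl_wf[OF ok2] k by simp
  have wf3: "circ_wf n S3" using okl_wf[OF ok3] True by simp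
  have P1s: "\<forall>q. q \<noteq> k \<longrightarrow> snd P1 q = PI"
  proof (intro allI impI)
    fix q assume "q \<noteq> k"
    show "snd P1 q = PI"
    proof (cases "q < k")
      case True then show ?thesis using okg_out[OF ok1, of q P] low P1_def by auto
    next
      case False
      then have "k < q" using \<open>q \<noteq> k\<close> by auto
      moreover have "\<forall>q. k + (n - 1 - k) < q \<longrightarrow> snd P q = PI" using sP k by (auto simp: supp_def)
      ultimately show ?thesis using sw_clear P1_def S1_def by auto
    qed
  qed
  have Q1l: "\<forall>j<k. snd Q1 j = PI" using okg_out[OF ok1] low Q1_def by auto
  have sQ1: "supp n Q1" using conjc_supp[OF wf1 sQ] Q1_def by simp
  have Q2h: "\<forall>q. Suc k < q \<longrightarrow> snd Q2 q = PI"
  proof -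
    have "\<forall>q. Suc k + (n - 2 - k) < q \<longrightarrow> snd Q1 q = PI" using sQ1 True by (auto simp: supp_def)
    then show ?thesis using sw_clear Q2_def S2_def by auto
  qed
  have Q2l: "\<forall>j<k. snd Q2 j = PI" using okg_out[OF ok2] Q1l Q2_def by auto
  have P1lt: "fst P1 < 4" using conjc_lt4 lt P1_def by auto
  have P2eq: "P2 = P1"
    unfolding P2_def
    by (rule conjc_id[OF _ P1lt]) (use ok2 P1s in \<open>fastforce simp: okg_def subset_iff\<close>)
  have sy2: "sympl n P2 Q2"
  proof -
    have "sympl n P2 Q2 = sympl n (conjc (S1 @ S2) P) (conjc (S1 @ S2) Q)"
      by (simp add: P2_def Q2_def P1_def Q1_def conjc_append)
    also have "\<dots> = sympl n P Q" using wf1 wf2 by (intro sympl_conjc) (auto simp: circ_wf_def)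
    finally show ?thesis using sy by simp
  qed
  have P2s: "\<forall>q. q \<noteq> k \<longrightarrow> snd P2 q = PI" using P2eq P1s by simp
  have anti2: "anti (snd P2 k) (snd Q2 k)" using sympl_single[OF k P2s] sy2 by simp
  have fl: "snd P3 k = PZ \<and> snd P3 (Suc k) = PI \<and> snd Q3 (Suc k) = PI \<and> snd Q3 k \<in> {PX, PY}"
    using finlink_res[OF anti2] P2s P3_def Q3_def S3_def by auto
  have P3s: "\<forall>q. q \<noteq> k \<longrightarrow> snd P3 q = PI"
  proof (intro allI impI)
    fix q assume "q \<noteq> k"
    show "snd P3 q = PI"
    proof (cases "q = Suc k")
      case True then show ?thesis using fl by simp
    next
      case False
      then have "snd P3 q = snd P2 q" using okg_out[OF ok3, of q P2] P3_def \<open>q \<noteq> k\<close> by fastforce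
      then show ?thesis using P2s \<open>q \<noteq> k\<close> by simp
    qed
  qed
  have Q3s: "\<forall>q. q \<noteq> k \<longrightarrow> snd Q3 q = PI"
  proof (intro allI impI)
    fix q assume "q \<noteq> k"
    show "snd Q3 q = PI"
    proof (cases "q = Suc k")
      case True then show ?thesis using fl by simp
    next
      case False
      then have "snd Q3 q = snd Q2 q" using okg_out[OF ok3, of q Q2] Q3_def \<open>q \<noteq> k\<close> by fastforce
      then show ?thesis using Q2h Q2l \<open>q \<noteq> k\<close> False by (cases "q < k") auto
    qed
  qed
  have e3: "fst P3 = 0 \<or> fst P3 = 2"
    using even_lt4 conjc_even conjc_lt4 ev lt
    unfolding P3_def P2_def P1_def by metis
  have f3: "fst Q3 = 0 \<or> fst Q3 = 2"
    using even_lt4 conjc_even conjc_lt4 ev lt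
    unfolding Q3_def Q2_def Q1_def by metis
  have P3e: "P3 = (fst P3, (\<lambda>_. PI)(k := PZ))" using single_eq[OF P3s] fl by simp
  have Q3e: "Q3 = (fst Q3, (\<lambda>_. PI)(k := snd Q3 k))" using single_eq[OF Q3s] .
  have cQ: "snd Q3 k = PX \<or> snd Q3 k = PY" using fl by auto
  have res: "conjc (finfix k P3 Q3) P3 = PXq k \<and> conjc (finfix k P3 Q3) Q3 = PZq k"
    using finfix_res[OF e3 f3 cQ, of k] P3e Q3e by metis
  show ?thesis unfolding st using res
    by (simp add: conjc_append P3_def Q3_def P2_def Q2_def P1_def Q1_def)
next
  case False
  then have n: "n = Suc k" using k by simp
  define S1 where "S1 = toZ k (snd P k)"
  have st: "stage n k P Q = S1 @ finfix k (conjc S1 P) (conjc S1 Q)"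
    using False by (simp add: stage_def Let_def S1_def)
  have Ps: "\<forall>q. q \<noteq> k \<longrightarrow> snd P q = PI"
  proof (intro allI impI)
    fix q assume "q \<noteq> k" then show "snd P q = PI" using low sP n by (cases "q < k") (auto simp: supp_def)
  qed
  have Qs: "\<forall>q. q \<noteq> k \<longrightarrow> snd Q q = PI"
  proof (intro allI impI)
    fix q assume "q \<noteq> k" then show "snd Q q = PI" using low sQ n by (cases "q < k") (auto simp: supp_def)
  qed
  have an: "anti (snd P k) (snd Q k)" using sympl_single[OF k Ps] sy by simp
  have okS: "\<forall>g\<in>set S1. okg k k g" using toZ_ok[of k k k] S1_def by auto
  have r1: "snd (conjc S1 P) k = PZ \<and> snd (conjc S1 Q) k \<in> {PX, PY}" using toZ_res[OF an] S1_def by simp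
  have P1s: "\<forall>q. q \<noteq> k \<longrightarrow> snd (conjc S1 P) q = PI"
  proof (intro allI impI)
    fix q assume q: "q \<noteq> k" then have "q < k \<or> k < q" by auto
    then show "snd (conjc S1 P) q = PI" using okg_out[OF okS, of q P] Ps q by auto
  qed
  have Q1s: "\<forall>q. q \<noteq> k \<longrightarrow> snd (conjc S1 Q) q = PI"
  proof (intro allI impI)
    fix q assume q: "q \<noteq> k" then have "q < k \<or> k < q" by auto
    then show "snd (conjc S1 Q) q = PI" using okg_out[OF okS, of q Q] Qs q by auto
  qed
  have e1: "fst (conjc S1 P) = 0 \<or> fst (conjc S1 P) = 2"
    using even_lt4 conjc_even conjc_lt4 ev lt by metis
  have f1: "fst (conjc S1 Q) = 0 \<or> fst (conjc S1 Q) = 2"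
    using even_lt4 conjc_even conjc_lt4 ev lt by metis
  have P1e: "conjc S1 P = (fst (conjc S1 P), (\<lambda>_. PI)(k := PZ))" using single_eq[OF P1s] r1 by simp
  have Q1e: "conjc S1 Q = (fst (conjc S1 Q), (\<lambda>_. PI)(k := snd (conjc S1 Q) k))" using single_eq[OF Q1s] .
  have cQ: "snd (conjc S1 Q) k = PX \<or> snd (conjc S1 Q) k = PY" using r1 by auto
  have res: "conjc (finfix k (conjc S1 P) (conjc S1 Q)) (conjc S1 P) = PXq k \<and>
             conjc (finfix k (conjc S1 P) (conjc S1 Q)) (conjc S1 Q) = PZq k"
    using finfix_res[OF e1 f1 cQ, of k] P1e Q1e by metis
  show ?thesis unfolding st using res by (simp add: conjc_append)
qed


fun gp :: "gate \<Rightarrow> (nat \<times> nat) list" where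
  "gp (CNOT a b) = [(a, b)]" | "gp (CZ a b) = [(a, b)]" | "gp (Hgate q) = []" | "gp (Pgate q k) = []"

definition gpairs :: "gate list \<Rightarrow> (nat \<times> nat) list" where
  "gpairs C = concat (map gp C)"

fun run :: "(nat \<Rightarrow> nat) \<times> nat \<Rightarrow> (nat \<times> nat) list \<Rightarrow> (nat \<Rightarrow> nat) \<times> nat" where
  "run s [] = s"
| "run (t, d) ((a, b) # ps) = (let l = max (t a) (t b) + 1 in run (t(a := l, b := l), max d l) ps)"

lemma run_append: "run s (A @ B) = run (run s A) B"
  by (induction s A rule: run.induct) (auto simp: Let_def)

lemma tq_run: "tq_depth_aux t d C = snd (run (t, d) (gpairs C))"
  by (induction t d C rule: tq_depth_aux.induct) (simp_all add: gpairs_def Let_def fun_upd_def)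

definition nm :: "nat \<times> nat \<Rightarrow> nat \<times> nat" where "nm p = (min (fst p) (snd p), max (fst p) (snd p))"

lemma run_nm: "run s ps = run s (map nm ps)"
proof (induction s ps rule: run.induct)
  case (1 s) then show ?case by simp
next
  case (2 t d a b ps)
  show ?case
  proof (cases "a \<le> b")
    case True then show ?thesis using 2 by (simp add: nm_def Let_def)
  next
    case False
    then have "t(a := l, b := l) = t(b := l, a := l)" for l by (auto simp: fun_eq_iff)
    then show ?thesis using 2 False by (simp add: nm_def Let_def max.commute)
  qed
qed

fun nsw :: "nat \<Rightarrow> nat \<Rightarrow> (nat \<times> nat) list" where
  "nsw lo 0 = []"
| "nsw lo (Suc m) = [(lo + m, Suc (lo + m)), (lo + m, Suc (lo + m))] @ nsw lo m"

lemma run_link: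
  assumes "fst s j \<le> b" "fst s (Suc j) \<le> b"
  shows "run s [(j, Suc j), (j, Suc j)] = ((fst s)(j := max (fst s j) (fst s (Suc j)) + 2, Suc j := max (fst s j) (fst s (Suc j)) + 2), max (snd s) (max (fst s j) (fst s (Suc j)) + 2))"
  by (cases s) (auto simp: Let_def fun_eq_iff max_def)

lemma sweep:
  assumes "\<forall>j. lo \<le> j \<longrightarrow> j < lo + m \<longrightarrow> fst s j \<le> a + 2 * (lo + m - j)"
    and "fst s (lo + m) \<le> a + 2" and "snd s \<le> D"
  shows "(\<forall>j. lo \<le> j \<longrightarrow> j \<le> lo + m \<longrightarrow> fst (run s (nsw lo m)) j \<le> a + 4 + 2 * (lo + m - j))
       \<and> (\<forall>j. j < lo \<or> lo + m < j \<longrightarrow> fst (run s (nsw lo m)) j = fst s j)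
       \<and> snd (run s (nsw lo m)) \<le> max D (a + 2 * m + 2)"
  using assms
proof (induction m arbitrary: s a D)
  case 0 then show ?case by auto
next
  case (Suc m)
  define L where "L = max (fst s (lo + m)) (fst s (Suc (lo + m))) + 2"
  have h1: "fst s (lo + m) \<le> a + 2" using Suc.prems(1)[rule_format, of "lo + m"] by simp
  have h2: "fst s (Suc (lo + m)) \<le> a + 2" using Suc.prems(2) by simp
  have L: "L \<le> a + 4" using h1 h2 by (simp add: L_def)
  define s1 where "s1 = run s [(lo + m, Suc (lo + m)), (lo + m, Suc (lo + m))]"
  have s1: "s1 = ((fst s)(lo + m := L, Suc (lo + m) := L), max (snd s) L)"
    unfolding s1_def L_def by (rule run_link[where b="max (fst s (lo + m)) (fst s (Suc (lo + m)))"]) auto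
  have pre1: "\<forall>j. lo \<le> j \<longrightarrow> j < lo + m \<longrightarrow> fst s1 j \<le> (a + 2) + 2 * (lo + m - j)"
    using Suc.prems(1) by (auto simp: s1)
  have pre2: "fst s1 (lo + m) \<le> (a + 2) + 2" using L by (simp add: s1)
  have pre3: "snd s1 \<le> max D (a + 4)" using L Suc.prems(3) by (auto simp: s1)
  note IH = Suc.IH[OF pre1 pre2 pre3]
  have r: "run s (nsw lo (Suc m)) = run s1 (nsw lo m)" by (simp add: s1_def run_append[symmetric])
  show ?case unfolding r
  proof (intro conjI allI impI)
    fix j assume j: "lo \<le> j" "j \<le> lo + Suc m"
    show "fst (run s1 (nsw lo m)) j \<le> a + 4 + 2 * (lo + Suc m - j)"
    proof (cases "j = Suc (lo + m)")
      case True
      then have "fst (run s1 (nsw lo m)) j = fst s1 j" using IH by auto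
      then show ?thesis using True L by (simp add: s1)
    next
      case False
      then have "j \<le> lo + m" using j by auto
      then have "fst (run s1 (nsw lo m)) j \<le> a + 2 + 4 + 2 * (lo + m - j)" using IH j by auto
      then show ?thesis using \<open>j \<le> lo + m\<close> by simp
    qed
  next
    fix j assume j: "j < lo \<or> lo + Suc m < j"
    then have "fst (run s1 (nsw lo m)) j = fst s1 j" using IH by auto
    then show "fst (run s1 (nsw lo m)) j = fst s j" using j by (auto simp: s1)
  next
    show "snd (run s1 (nsw lo m)) \<le> max D (a + 2 * Suc m + 2)" using IH by auto
  qed
qed

fun swp :: "nat \<Rightarrow> nat \<Rightarrow> (nat \<times> nat) list" where
  "swp lo 0 = []"
| "swp lo (Suc m) = [(lo + m, Suc (lo + m)), (Suc (lo + m), lo + m)] @ swp lo m"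

lemma nm_swp: "map nm (swp lo m) = nsw lo m"
  by (induction m) (auto simp: nm_def)

lemma nsw_shift: "nsw (Suc lo) m @ [(lo, Suc lo), (lo, Suc lo)] = nsw lo (Suc m)"
  by (induction m) auto

definition stp :: "nat \<Rightarrow> nat \<Rightarrow> (nat \<times> nat) list" where
  "stp n k = (if Suc k < n then swp k (n - 1 - k) @ swp (Suc k) (n - 2 - k) @ [(k, Suc k), (k, Suc k)] else [])"

lemma nm_stp: "Suc k < n \<Longrightarrow> map nm (stp n k) = nsw k (n - 1 - k) @ nsw k (n - 1 - k)"
proof -
  assume k: "Suc k < n"
  have e: "n - 1 - k = Suc (n - 2 - k)" using k by arith
  have "map nm (stp n k) = nsw k (n - 1 - k) @ (nsw (Suc k) (n - 2 - k) @ [(k, Suc k), (k, Suc k)])"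
    using k by (simp add: stp_def nm_swp nm_def)
  also have "\<dots> = nsw k (n - 1 - k) @ nsw k (n - 1 - k)" unfolding nsw_shift e ..
  finally show ?thesis .
qed

fun bp :: "nat \<Rightarrow> nat \<Rightarrow> (nat \<times> nat) list" where
  "bp n 0 = []"
| "bp n (Suc k) = bp n k @ stp n k"

lemma bp_bound:
  assumes "k \<le> n - 1"
  shows "(\<forall>j. k \<le> j \<longrightarrow> j \<le> n - 1 \<longrightarrow> fst (run (\<lambda>_. 0, 0) (map nm (bp n k))) j \<le> 8 * k + 2 * (n - 1 - j))
       \<and> snd (run (\<lambda>_. 0, 0) (map nm (bp n k))) \<le> 8 * k + 2 * (n - 1)"
  using assms
proof (induction k)
  case 0 then show ?case by simp
next
  case (Suc k)
  then have k: "Suc k < n" by arith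
  define s where "s = run (\<lambda>_. 0, 0) (map nm (bp n k))"
  have IH: "\<forall>j. k \<le> j \<longrightarrow> j \<le> n - 1 \<longrightarrow> fst s j \<le> 8 * k + 2 * (n - 1 - j)"
      "snd s \<le> 8 * k + 2 * (n - 1)" using Suc k unfolding s_def by auto
  define m where "m = n - 1 - k"
  have hi: "k + m = n - 1" using k by (simp add: m_def)
  have eq: "run (\<lambda>_. 0, 0) (map nm (bp n (Suc k))) = run (run s (nsw k m)) (nsw k m)"
    using k by (simp add: s_def run_append nm_stp m_def)
  have A1: "\<forall>j. k \<le> j \<longrightarrow> j < k + m \<longrightarrow> fst s j \<le> 8 * k + 2 * (k + m - j)"
    using IH(1) hi by auto
  have "fst s (n - 1) \<le> 8 * k + 2 * (n - 1 - (n - 1))" using IH(1)[rule_format, of "n - 1"] k by linarith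
  then have A2: "fst s (k + m) \<le> 8 * k + 2" using hi by simp
  note S1 = sweep[OF A1 A2 IH(2)]
  define s1 where "s1 = run s (nsw k m)"
  have B1: "\<forall>j. k \<le> j \<longrightarrow> j < k + m \<longrightarrow> fst s1 j \<le> (8 * k + 4) + 2 * (k + m - j)"
    using S1 unfolding s1_def by auto
  have B2: "fst s1 (k + m) \<le> (8 * k + 4) + 2" using conjunct1[OF S1, rule_format, of "k + m"] unfolding s1_def by simp
  have B3: "snd s1 \<le> max (8 * k + 2 * (n - 1)) (8 * k + 2 * m + 2)" using S1 unfolding s1_def by auto
  note S2 = sweep[OF B1 B2 B3]
  show ?case unfolding eq s1_def[symmetric]
  proof (intro conjI allI impI)
    fix j assume j: "Suc k \<le> j" "j \<le> n - 1"
    then have "fst (run s1 (nsw k m)) j \<le> 8 * k + 4 + 4 + 2 * (k + m - j)" using S2 hi by auto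
    then show "fst (run s1 (nsw k m)) j \<le> 8 * Suc k + 2 * (n - 1 - j)" using hi by simp
  next
    show "snd (run s1 (nsw k m)) \<le> 8 * Suc k + 2 * (n - 1)" using S2 hi by auto
  qed
qed

lemma bp_depth: "2 \<le> n \<Longrightarrow> snd (run (\<lambda>_. 0, 0) (bp n n)) \<le> 14 * n - 4"
proof -
  assume n: "2 \<le> n"
  have "bp n n = bp n (n - 1)"
    using n by (cases n) (auto simp: stp_def)
  then have "snd (run (\<lambda>_. 0, 0) (bp n n)) = snd (run (\<lambda>_. 0, 0) (map nm (bp n (n - 1))))"
    using run_nm by metis
  also have "\<dots> \<le> 8 * (n - 1) + 2 * (n - 1)" using bp_bound[of "n - 1" n] by auto
  also have "\<dots> \<le> 14 * n - 4" using n by arith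
  finally show ?thesis .
qed


lemma gpairs_append: "gpairs (A @ B) = gpairs A @ gpairs B" by (simp add: gpairs_def)
lemma gpairs_toZ: "gpairs (toZ q a) = []" by (cases a) (auto simp: gpairs_def toZ_def)
lemma gpairs_toX: "gpairs (toX q a) = []" by (cases a) (auto simp: gpairs_def toX_def)
lemma toX_gp: "concat (map gp (toX q a)) = []" by (cases a) (auto simp: toX_def)
lemma toZ_gp: "concat (map gp (toZ q a)) = []" by (cases a) (auto simp: toZ_def)
lemma gpairs_linkop: "gpairs (linkop j a b) = [(j, Suc j), (Suc j, j)]"
  by (auto simp: linkop_def gpairs_append gpairs_toZ gpairs_toX) (auto simp: gpairs_def)
lemma gpairs_sw: "gpairs (sw lo m P) = swp lo m"
  by (induction m arbitrary: P) (auto simp: Let_def gpairs_append gpairs_linkop, simp add: gpairs_def)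
lemma gpairs_finlink: "gpairs (finlink k P Q) = [(k, Suc k), (k, Suc k)]"
  by (simp add: finlink_def Let_def gpairs_def toX_gp toZ_gp)
lemma gpairs_finfix: "gpairs (finfix k P Q) = []"
  by (simp add: finfix_def Let_def gpairs_append) (simp add: gpairs_def)
lemma gpairs_stage: "gpairs (stage n k P Q) = stp n k"
  by (simp add: stage_def stp_def Let_def gpairs_append gpairs_sw gpairs_finlink gpairs_finfix gpairs_toZ)

fun build :: "nat \<Rightarrow> gate list \<Rightarrow> nat \<Rightarrow> gate list" where
  "build n C0 0 = []"
| "build n C0 (Suc k) = build n C0 k @ stage n k (conjc (C0 @ build n C0 k) (PXq k)) (conjc (C0 @ build n C0 k) (PZq k))"

lemma gpairs_build: "gpairs (build n C0 k) = bp n k"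
  by (induction k) (auto simp: gpairs_append gpairs_stage, simp add: gpairs_def)

lemma build_ok: "k \<le> n \<Longrightarrow> g \<in> set (build n C0 k) \<Longrightarrow> okg 0 (n - 1) g"
proof (induction k)
  case (Suc k)
  show ?case
  proof (cases "g \<in> set (build n C0 k)")
    case True then show ?thesis using Suc by simp
  next
    case False
    then have "okg k (n - 1) g" using Suc.prems stage_ok[of k n] by auto
    then show ?thesis by (rule okg_mono) auto
  qed
qed simp

lemma sympl_comm: "sympl n P Q = sympl n Q P"
  unfolding sympl_def anti_def by (rule arg_cong[where f=odd], rule sum.cong) auto

lemma supp_PXq: "k < n \<Longrightarrow> supp n (PXq k)" by (auto simp: supp_def PXq_def)
lemma supp_PZq: "k < n \<Longrightarrow> supp n (PZq k)" by (auto simp: supp_def PZq_def)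

lemma build_inv:
  assumes wf: "circ_wf n C0" and k: "k \<le> n"
  shows "\<forall>j<k. conjc (C0 @ build n C0 k) (PXq j) = PXq j \<and> conjc (C0 @ build n C0 k) (PZq j) = PZq j"
  using k
proof (induction k)
  case 0 then show ?case by simp
next
  case (Suc k)
  then have k: "k < n" by simp
  define E where "E = C0 @ build n C0 k"
  define P where "P = conjc E (PXq k)"
  define Q where "Q = conjc E (PZq k)"
  have IH: "\<forall>j<k. conjc E (PXq j) = PXq j \<and> conjc E (PZq j) = PZq j"
    using Suc k E_def by auto
  have wfb: "circ_wf n (build n C0 k)"
  proof -
    have "\<forall>g\<in>set (build n C0 k). okg 0 (n - 1) g" using build_ok k less_imp_le by blast
    then show ?thesis using okl_wf k by auto
  qed
  have wfE: "circ_wf n E" using wf wfb by (auto simp: E_def circ_wf_def)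
  have sP: "supp n P" using conjc_supp[OF wfE supp_PXq[OF k]] P_def by simp
  have sQ: "supp n Q" using conjc_supp[OF wfE supp_PZq[OF k]] Q_def by simp
  have low: "\<forall>j<k. snd P j = PI \<and> snd Q j = PI"
  proof (intro allI impI)
    fix j assume j: "j < k"
    have jn: "j < n" using j k by simp
    have sX: "\<forall>q. q \<noteq> j \<longrightarrow> snd (PXq j) q = PI" by (simp add: PXq_def)
    have sZ: "\<forall>q. q \<noteq> j \<longrightarrow> snd (PZq j) q = PI" by (simp add: PZq_def)
    have "sympl n (PXq j) R = sympl n (conjc E (PXq j)) (conjc E R)" for R
      using IH j sympl_conjc[OF wfE] by metis
    then have eqs: "sympl n (PXq j) (conjc E R) = sympl n (PXq j) R"
                   "sympl n (PZq j) (conjc E R) = sympl n (PZq j) R" for R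
      using IH j sympl_conjc[OF wfE] by metis+
    have n1: "\<not> sympl n (PXq j) (PXq k)" "\<not> sympl n (PZq j) (PXq k)"
         "\<not> sympl n (PXq j) (PZq k)" "\<not> sympl n (PZq j) (PZq k)"
      using sympl_single[OF jn sX] sympl_single[OF jn sZ] j
      by (auto simp: PXq_def PZq_def anti_def)
    have a1: "\<not> anti PX (snd P j)" "\<not> anti PZ (snd P j)"
      using eqs[of "PXq k"] n1 sympl_single[OF jn sX] sympl_single[OF jn sZ] P_def
      by (auto simp: PXq_def PZq_def)
    have a2: "\<not> anti PX (snd Q j)" "\<not> anti PZ (snd Q j)"
      using eqs[of "PZq k"] n1 sympl_single[OF jn sX] sympl_single[OF jn sZ] Q_def
      by (auto simp: PXq_def PZq_def)
    show "snd P j = PI \<and> snd Q j = PI" using a1 a2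
      by (cases "snd P j"; cases "snd Q j") (auto simp: anti_def)
  qed
  have sy: "sympl n P Q"
  proof -
    have "sympl n P Q = sympl n (PXq k) (PZq k)" unfolding P_def Q_def by (rule sympl_conjc[OF wfE])
    also have "\<dots> = True" using sympl_single[OF k, of "PXq k" "PZq k"] by (auto simp: PXq_def PZq_def anti_def)
    finally show ?thesis by simp
  qed
  have ev: "even (fst P)" "even (fst Q)" using conjc_even P_def Q_def by (auto simp: PXq_def PZq_def)
  have lt: "fst P < 4" "fst Q < 4" using conjc_lt4 P_def Q_def by (auto simp: PXq_def PZq_def)
  note res = stage_res[OF k sP sQ low sy ev lt]
  have okS: "\<forall>g\<in>set (stage n k P Q). okg k (n - 1) g" using stage_ok k by blast
  have CE: "C0 @ build n C0 (Suc k) = E @ stage n k P Q" unfolding P_def Q_def E_def by simp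
  show ?case unfolding CE conjc_append
  proof (intro allI impI)
    fix j assume j: "j < Suc k"
    show "conjc (stage n k P Q) (conjc E (PXq j)) = PXq j \<and> conjc (stage n k P Q) (conjc E (PZq j)) = PZq j"
    proof (cases "j = k")
      case True
      then show ?thesis using res by (simp add: P_def Q_def)
    next
      case False
      then have jk: "j < k" using j by simp
      have idX: "conjc (stage n k P Q) (PXq j) = PXq j"
        by (rule conjc_id) (use okS jk in \<open>fastforce simp: okg_def PXq_def subset_iff\<close>, simp add: PXq_def)
      have idZ: "conjc (stage n k P Q) (PZq j) = PZq j"
        by (rule conjc_id) (use okS jk in \<open>fastforce simp: okg_def PZq_def subset_iff\<close>, simp add: PZq_def)
      show ?thesis using IH jk idX idZ by simp
    qed
  qed
qed


definition Bn :: "nat \<Rightarrow> (nat \<Rightarrow> bool) set" where "Bn n = {b. \<forall>q\<ge>n. \<not> b q}"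
definition low :: "nat \<Rightarrow> (nat \<Rightarrow> bool) \<Rightarrow> (nat \<Rightarrow> bool)" where "low n y = (\<lambda>q. q < n \<and> y q)"
definition mrg :: "nat \<Rightarrow> (nat \<Rightarrow> bool) \<Rightarrow> (nat \<Rightarrow> bool) \<Rightarrow> (nat \<Rightarrow> bool)" where
  "mrg n b y = (\<lambda>q. if q < n then b q else y q)"

lemma finite_Bn: "finite (Bn n)"
proof -
  have "Bn n \<subseteq> (\<lambda>S q. q \<in> S) ` Pow {..<n}"
  proof
    fix b assume "b \<in> Bn n"
    then have "b = (\<lambda>q. q \<in> {q. b q})" "{q. b q} \<in> Pow {..<n}"
      by (auto simp: Bn_def not_le[symmetric])
    then show "b \<in> (\<lambda>S q. q \<in> S) ` Pow {..<n}" by blast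
  qed
  then show ?thesis by (rule finite_subset) simp
qed

lemma low_Bn[simp]: "low n y \<in> Bn n" by (simp add: low_def Bn_def)
lemma mrg_low[simp]: "mrg n (low n y) y = y" by (auto simp: mrg_def low_def fun_eq_iff)
lemma low_mrg[simp]: "b \<in> Bn n \<Longrightarrow> low n (mrg n b y) = b" by (auto simp: mrg_def low_def fun_eq_iff Bn_def)
lemma mrg_mrg[simp]: "mrg n b' (mrg n b y) = mrg n b' y" by (auto simp: mrg_def fun_eq_iff)
lemma mrg_upd: "q < n \<Longrightarrow> (mrg n b y)(q := v) = mrg n (b(q := v)) y" by (auto simp: mrg_def fun_eq_iff)
lemma mrg_at: "q < n \<Longrightarrow> mrg n b y q = b q" by (simp add: mrg_def)
lemma low_upd: "q < n \<Longrightarrow> low n (y(q := v)) = (low n y)(q := v)" by (auto simp: low_def fun_eq_iff)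
lemma low_at: "q < n \<Longrightarrow> low n y q = y q" by (simp add: low_def)
lemma Bn_upd: "b \<in> Bn n \<Longrightarrow> q < n \<Longrightarrow> b(q := v) \<in> Bn n" by (auto simp: Bn_def)

definition loc :: "nat \<Rightarrow> (state \<Rightarrow> state) \<Rightarrow> bool" where
  "loc n W = (\<exists>M. \<forall>\<psi> y. W \<psi> y = (\<Sum>b\<in>Bn n. M (low n y) b * \<psi> (mrg n b y)))"

lemma loc_perm:
  assumes "\<And>a. a \<in> Bn n \<Longrightarrow> f a \<in> Bn n"
    and "\<And>\<psi> y. W \<psi> y = c (low n y) * \<psi> (mrg n (f (low n y)) y)"
  shows "loc n W"
  unfolding loc_def
proof (intro exI allI)
  fix \<psi> y
  have "(\<Sum>b\<in>Bn n. (if b = f (low n y) then c (low n y) else 0) * \<psi> (mrg n b y))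
       = (\<Sum>b\<in>Bn n. if b = f (low n y) then c (low n y) * \<psi> (mrg n b y) else 0)"
    by (rule sum.cong) auto
  also have "\<dots> = c (low n y) * \<psi> (mrg n (f (low n y)) y)"
    using assms(1)[of "low n y"] finite_Bn by (simp add: sum.delta)
  finally show "W \<psi> y = (\<Sum>b\<in>Bn n. (\<lambda>a b. if b = f a then c a else 0) (low n y) b * \<psi> (mrg n b y))"
    using assms(2) by simp
qed

lemma loc_add: "loc n W1 \<Longrightarrow> loc n W2 \<Longrightarrow> loc n (\<lambda>\<psi> y. W1 \<psi> y + W2 \<psi> y)"
  unfolding loc_def
proof (elim exE)
  fix M1 M2
  assume 1: "\<forall>\<psi> y. W1 \<psi> y = (\<Sum>b\<in>Bn n. M1 (low n y) b * \<psi> (mrg n b y))"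
     and 2: "\<forall>\<psi> y. W2 \<psi> y = (\<Sum>b\<in>Bn n. M2 (low n y) b * \<psi> (mrg n b y))"
  show "\<exists>M. \<forall>\<psi> y. W1 \<psi> y + W2 \<psi> y = (\<Sum>b\<in>Bn n. M (low n y) b * \<psi> (mrg n b y))"
    by (rule exI[where x="\<lambda>a b. M1 a b + M2 a b"]) (simp add: 1 2 distrib_right sum.distrib)
qed

lemma loc_comp: "loc n W1 \<Longrightarrow> loc n W2 \<Longrightarrow> loc n (\<lambda>\<psi>. W2 (W1 \<psi>))"
  unfolding loc_def
proof (elim exE)
  fix M1 M2
  assume 1: "\<forall>\<psi> y. W1 \<psi> y = (\<Sum>b\<in>Bn n. M1 (low n y) b * \<psi> (mrg n b y))"
     and 2: "\<forall>\<psi> y. W2 \<psi> y = (\<Sum>b\<in>Bn n. M2 (low n y) b * \<psi> (mrg n b y))"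
  show "\<exists>M. \<forall>\<psi> y. W2 (W1 \<psi>) y = (\<Sum>b\<in>Bn n. M (low n y) b * \<psi> (mrg n b y))"
  proof (intro exI allI)
    fix \<psi> y
    have "W2 (W1 \<psi>) y = (\<Sum>b\<in>Bn n. M2 (low n y) b * (\<Sum>b'\<in>Bn n. M1 b b' * \<psi> (mrg n b' y)))"
      using 1 2 by (simp cong: sum.cong)
    also have "\<dots> = (\<Sum>b\<in>Bn n. \<Sum>b'\<in>Bn n. M2 (low n y) b * M1 b b' * \<psi> (mrg n b' y))"
      by (simp add: sum_distrib_left mult.assoc)
    also have "\<dots> = (\<Sum>b'\<in>Bn n. \<Sum>b\<in>Bn n. M2 (low n y) b * M1 b b' * \<psi> (mrg n b' y))"
      by (rule sum.swap)
    also have "\<dots> = (\<Sum>b'\<in>Bn n. (\<Sum>b\<in>Bn n. M2 (low n y) b * M1 b b') * \<psi> (mrg n b' y))"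
      by (simp add: sum_distrib_right)
    finally show "W2 (W1 \<psi>) y = (\<Sum>b'\<in>Bn n. (\<lambda>a b'. \<Sum>b\<in>Bn n. M2 a b * M1 b b') (low n y) b' * \<psi> (mrg n b' y))"
      by simp
  qed
qed

lemma loc_gate: "gate_wf n g \<Longrightarrow> loc n (gate_sem g)"
proof (cases g)
  case (Hgate q)
  assume wf: "gate_wf n g"
  then have q: "q < n" using Hgate by simp
  have A: "loc n (\<lambda>\<psi> y. (1 / complex_of_real (sqrt 2)) * \<psi> (mrg n ((low n y)(q := False)) y))"
    by (rule loc_perm[where f="\<lambda>a. a(q := False)" and c="\<lambda>_. 1 / complex_of_real (sqrt 2)"]) (auto intro: Bn_upd q)
  have B: "loc n (\<lambda>\<psi> y. ((if low n y q then -1 else 1) / complex_of_real (sqrt 2)) * \<psi> (mrg n ((low n y)(q := True)) y))"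
    by (rule loc_perm[where f="\<lambda>a. a(q := True)" and c="\<lambda>a. (if a q then -1 else 1) / complex_of_real (sqrt 2)"]) (auto intro: Bn_upd q)
  have "gate_sem g = (\<lambda>\<psi> y. (1 / complex_of_real (sqrt 2)) * \<psi> (mrg n ((low n y)(q := False)) y) +
     ((if low n y q then -1 else 1) / complex_of_real (sqrt 2)) * \<psi> (mrg n ((low n y)(q := True)) y))"
    using q Hgate by (auto simp: fun_eq_iff mrg_upd[symmetric] low_at add_divide_distrib)
  then show ?thesis using loc_add[OF A B] by simp
next
  case (Pgate q k)
  assume wf: "gate_wf n g"
  then have q: "q < n" using Pgate by simp
  show ?thesis
    by (rule loc_perm[where f="\<lambda>a. a" and c="\<lambda>a. if a q then \<i> ^ k else 1"]) (auto simp: Pgate low_at q)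
next
  case (CNOT c t)
  assume wf: "gate_wf n g"
  then have ct: "c < n" "t < n" using CNOT by auto
  show ?thesis
    by (rule loc_perm[where f="\<lambda>a. a(t := (a t \<noteq> a c))" and c="\<lambda>a. 1"])
       (auto simp: CNOT low_at ct mrg_upd[symmetric] intro: Bn_upd)
next
  case (CZ a b)
  assume wf: "gate_wf n g"
  then have ab: "a < n" "b < n" using CZ by auto
  show ?thesis
    by (rule loc_perm[where f="\<lambda>x. x" and c="\<lambda>x. if x a \<and> x b then -1 else 1"]) (auto simp: CZ low_at ab)
qed

lemma loc_circ: "circ_wf n C \<Longrightarrow> loc n (circ_sem C)"
proof (induction C)
  case Nil
  have "loc n (\<lambda>\<psi> y. 1 * \<psi> (mrg n (low n y) y))" by (rule loc_perm[where f="\<lambda>a. a"]) auto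
  then show ?case by (simp add: fun_eq_iff[symmetric])
next
  case (Cons g C)
  then have "gate_wf n g" "circ_wf n C" by (auto simp: circ_wf_def)
  then have "loc n (\<lambda>\<psi>. circ_sem C (gate_sem g \<psi>))" using Cons loc_comp loc_gate by blast
  then show ?case by (simp add: fun_eq_iff[symmetric])
qed


definition nrm :: "nat \<Rightarrow> (nat \<Rightarrow> bool) \<Rightarrow> state \<Rightarrow> real" where
  "nrm n y \<psi> = (\<Sum>b\<in>Bn n. (cmod (\<psi> (mrg n b y)))\<^sup>2)"

lemma norm_perm:
  assumes f: "\<And>a. a \<in> Bn n \<Longrightarrow> f a \<in> Bn n" "\<And>a. a \<in> Bn n \<Longrightarrow> f (f a) = a"
    and c: "\<And>a. cmod (c a) = 1"
    and W: "\<And>\<psi> y. W \<psi> y = c (low n y) * \<psi> (mrg n (f (low n y)) y)"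
  shows "nrm n y (W \<psi>) = nrm n y \<psi>"
proof -
  have "nrm n y (W \<psi>) = (\<Sum>b\<in>Bn n. (cmod (\<psi> (mrg n (f b) y)))\<^sup>2)"
    unfolding nrm_def by (rule sum.cong) (auto simp: W norm_mult c)
  also have "\<dots> = (\<Sum>b\<in>Bn n. (cmod (\<psi> (mrg n b y)))\<^sup>2)"
    by (rule sum.reindex_bij_witness[where i=f and j=f]) (auto simp: f)
  finally show ?thesis by (simp add: nrm_def)
qed

lemma sum_split_q:
  assumes q: "q < n"
  shows "(\<Sum>b\<in>Bn n. g b) = (\<Sum>b\<in>{b\<in>Bn n. \<not> b q}. g b + g (b(q := True)))"
proof -
  let ?B0 = "{b\<in>Bn n. \<not> b q}"
  have U: "Bn n = ?B0 \<union> (\<lambda>b. b(q := True)) ` ?B0"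
  proof (intro set_eqI iffI)
    fix b assume b: "b \<in> Bn n"
    show "b \<in> ?B0 \<union> (\<lambda>b. b(q := True)) ` ?B0"
    proof (cases "b q")
      case True
      then have "b = (b(q := False))(q := True)" by (auto simp: fun_eq_iff)
      moreover have "b(q := False) \<in> ?B0" using b q by (auto intro: Bn_upd)
      ultimately show ?thesis by blast
    qed (use b in auto)
  qed (auto intro: Bn_upd q)
  have fin: "finite ?B0" using finite_Bn by auto
  have inj: "inj_on (\<lambda>b. b(q := True)) ?B0"
    by (rule inj_onI) (auto simp: fun_eq_iff split: if_splits)
  have dis: "?B0 \<inter> (\<lambda>b. b(q := True)) ` ?B0 = {}" by auto
  have "(\<Sum>b\<in>Bn n. g b) = (\<Sum>b\<in>?B0. g b) + (\<Sum>b\<in>(\<lambda>b. b(q := True)) ` ?B0. g b)"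
    by (subst U, rule sum.union_disjoint) (use fin dis in auto)
  also have "(\<Sum>b\<in>(\<lambda>b. b(q := True)) ` ?B0. g b) = (\<Sum>b\<in>?B0. g (b(q := True)))"
    by (rule sum.reindex[OF inj, unfolded comp_def])
  finally show ?thesis by (simp add: sum.distrib)
qed

lemma parallelogram_c: "(cmod (u + v))\<^sup>2 + (cmod (u - v))\<^sup>2 = 2 * ((cmod u)\<^sup>2 + (cmod v)\<^sup>2)"
  unfolding cmod_power2 by (simp add: power2_eq_square algebra_simps)

lemma cmod_div_sqrt2: "(cmod (z / complex_of_real (sqrt 2)))\<^sup>2 = (cmod z)\<^sup>2 / 2"
  by (simp add: norm_divide power_divide)

lemma norm_H:
  assumes q: "q < n"
  shows "nrm n y (gate_sem (Hgate q) \<psi>) = nrm n y \<psi>"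
proof -
  let ?B0 = "{b\<in>Bn n. \<not> b q}"
  let ?u = "\<lambda>b. \<psi> (mrg n (b(q := False)) y)"
  let ?v = "\<lambda>b. \<psi> (mrg n (b(q := True)) y)"
  have G: "gate_sem (Hgate q) \<psi> (mrg n b y) = (?u b + (if b q then -1 else 1) * ?v b) / complex_of_real (sqrt 2)" for b
    using q by (simp add: mrg_upd mrg_at)
  have "nrm n y (gate_sem (Hgate q) \<psi>) =
        (\<Sum>b\<in>?B0. (cmod ((?u b + ?v b) / complex_of_real (sqrt 2)))\<^sup>2 + (cmod ((?u b - ?v b) / complex_of_real (sqrt 2)))\<^sup>2)"
    unfolding nrm_def sum_split_q[OF q] by (rule sum.cong) (auto simp del: gate_sem.simps simp: G)
  also have "\<dots> = (\<Sum>b\<in>?B0. (cmod (?u b))\<^sup>2 + (cmod (?v b))\<^sup>2)"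
    by (rule sum.cong) (simp_all add: cmod_div_sqrt2 add_divide_distrib[symmetric] parallelogram_c)
  also have "\<dots> = nrm n y \<psi>"
    unfolding nrm_def sum_split_q[OF q]
  proof (rule sum.cong)
    fix b assume "b \<in> ?B0"
    then have "b(q := False) = b" by (auto simp: fun_eq_iff)
    then show "(cmod (?u b))\<^sup>2 + (cmod (?v b))\<^sup>2 = (cmod (\<psi> (mrg n b y)))\<^sup>2 + (cmod (\<psi> (mrg n (b(q := True)) y)))\<^sup>2"
      by simp
  qed simp
  finally show ?thesis .
qed

lemma norm_gate: "gate_wf n g \<Longrightarrow> nrm n y (gate_sem g \<psi>) = nrm n y \<psi>"
proof (cases g)
  case (Hgate q) then show "gate_wf n g \<Longrightarrow> ?thesis" using norm_H by auto
next
  case (Pgate q k)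
  assume "gate_wf n g" then have q: "q < n" using Pgate by simp
  show ?thesis
    by (rule norm_perm[where f="\<lambda>a. a" and c="\<lambda>a. if a q then \<i> ^ k else 1"])
       (auto simp: Pgate low_at q norm_power)
next
  case (CNOT c t)
  assume "gate_wf n g" then have ct: "c < n" "t < n" "c \<noteq> t" using CNOT by auto
  show ?thesis
    by (rule norm_perm[where f="\<lambda>a. a(t := (a t \<noteq> a c))" and c="\<lambda>a. 1"])
       (auto simp: CNOT low_at ct mrg_upd[symmetric] fun_eq_iff intro: Bn_upd)
next
  case (CZ a b)
  assume "gate_wf n g" then have ab: "a < n" "b < n" using CZ by auto
  show ?thesis
    by (rule norm_perm[where f="\<lambda>x. x" and c="\<lambda>x. if x a \<and> x b then -1 else 1"]) (auto simp: CZ low_at ab)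
qed

lemma norm_circ: "circ_wf n C \<Longrightarrow> nrm n y (circ_sem C \<psi>) = nrm n y \<psi>"
  by (induction C arbitrary: \<psi>) (auto simp: circ_wf_def norm_gate)


lemma mrg_Bn: "a \<in> Bn n \<Longrightarrow> b \<in> Bn n \<Longrightarrow> mrg n b a = b"
  by (auto simp: mrg_def Bn_def fun_eq_iff)

lemma low_Bn_id: "a \<in> Bn n \<Longrightarrow> low n a = a"
  by (auto simp: low_def Bn_def fun_eq_iff; meson not_less)

lemma scalar:
  assumes L: "loc n W"
    and X: "\<And>q \<psi>. q < n \<Longrightarrow> W (sig PX q \<psi>) = sig PX q (W \<psi>)"
    and Z: "\<And>q \<psi>. q < n \<Longrightarrow> W (sig PZ q \<psi>) = sig PZ q (W \<psi>)"
  shows "\<exists>c. \<forall>\<psi> y. W \<psi> y = c * \<psi> y"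
proof -
  obtain M where M: "\<And>\<psi> y. W \<psi> y = (\<Sum>b\<in>Bn n. M (low n y) b * \<psi> (mrg n b y))"
    using L unfolding loc_def by blast
  have Wat: "W \<phi> a = (\<Sum>b\<in>Bn n. M a b * \<phi> b)" if a: "a \<in> Bn n" for \<phi> a
    using M[of \<phi> a] a by (simp add: low_Bn_id mrg_Bn cong: sum.cong)
  have Wd: "W (\<lambda>z. if z = b then c else 0) a = M a b * c" if a: "a \<in> Bn n" and b: "b \<in> Bn n" for a b c
  proof -
    have "W (\<lambda>z. if z = b then c else 0) a = (\<Sum>b'\<in>Bn n. if b' = b then M a b * c else 0)"
      unfolding Wat[OF a] by (rule sum.cong) auto
    also have "\<dots> = M a b * c" using b finite_Bn by simp
    finally show ?thesis .
  qed
  have off: "M a b = 0" if a: "a \<in> Bn n" and b: "b \<in> Bn n" and ab: "a \<noteq> b" for a b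
  proof -
    obtain q where "a q \<noteq> b q" using ab by (auto simp: fun_eq_iff)
    moreover have "q < n" using calculation a b by (auto simp: Bn_def not_less[symmetric])
    ultimately have q: "q < n" "a q \<noteq> b q" by auto
    let ?d = "\<lambda>z. if z = b then (1::complex) else 0"
    have "sig PZ q ?d = (\<lambda>z. if z = b then (if b q then -1 else 1) else 0)"
      by (auto simp: sig_def fun_eq_iff)
    then have e1: "W (sig PZ q ?d) a = M a b * (if b q then -1 else 1)" using Wd[OF a b] by simp
    have e2: "sig PZ q (W ?d) a = (if a q then -1 else 1) * (M a b * 1)"
      using Wd[OF a b] by (simp add: sig_def)
    have e3: "W (sig PZ q ?d) a = sig PZ q (W ?d) a" by (simp only: Z[OF q(1)])
    have eq: "M a b * (if b q then -1 else 1) = (if a q then -1 else 1) * (M a b * 1)"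
      using e3 unfolding e1 e2 .
    show ?thesis
    proof (cases "a q")
      case True then have "\<not> b q" using q(2) by simp
      then have "M a b = - M a b" using eq True by simp
      then show ?thesis by simp
    next
      case False then have "b q" using q(2) by simp
      then have "- M a b = M a b" using eq False by simp
      then show ?thesis by simp
    qed
  qed
  define m where "m a = M a a" for a
  have diag: "W \<psi> y = m (low n y) * \<psi> y" for \<psi> y
  proof -
    have "W \<psi> y = (\<Sum>b\<in>Bn n. if b = low n y then m (low n y) * \<psi> (mrg n b y) else 0)"
      unfolding M by (rule sum.cong) (auto simp: off m_def)
    also have "\<dots> = m (low n y) * \<psi> y" using finite_Bn by simp
    finally show ?thesis .
  qed
  have flip: "m a = m (a(q := \<not> a q))" if a: "a \<in> Bn n" and q: "q < n" for a q
  proof -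
    let ?one = "\<lambda>z. (1::complex)"
    have s1: "sig PX q ?one = ?one" by (simp add: sig_def)
    have "W ?one a = sig PX q (W ?one) a" using X[OF q, of ?one] s1 by simp
    then have "m (low n a) = m (low n (a(q := \<not> a q)))" using diag by (simp add: sig_def)
    then show ?thesis using a q by (simp add: low_Bn_id Bn_upd)
  qed
  have clr: "m a = m (a(q := False))" if a: "a \<in> Bn n" and q: "q < n" for a q
    using flip[OF a q] by (cases "a q") (auto simp: fun_upd_idem)
  have ind: "\<forall>a\<in>Bn n. (\<forall>q\<ge>k. \<not> a q) \<longrightarrow> m a = m (\<lambda>_. False)" for k
  proof (induction k)
    case 0 then show ?case by (auto simp: fun_eq_iff)
  next
    case (Suc k)
    show ?case
    proof (intro ballI impI)
      fix a assume a: "a \<in> Bn n" and h: "\<forall>q\<ge>Suc k. \<not> a q"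
      show "m a = m (\<lambda>_. False)"
      proof (cases "k < n")
        case True
        have "a(k := False) \<in> Bn n" using a True by (rule Bn_upd)
        moreover have "\<forall>q\<ge>k. \<not> (a(k := False)) q"
        proof (intro allI impI)
          fix q assume "k \<le> q"
          then show "\<not> (a(k := False)) q" using h[rule_format, of q] by (cases "q = k") auto
        qed
        ultimately have "m (a(k := False)) = m (\<lambda>_. False)" using Suc.IH by blast
        then show ?thesis using clr[OF a True] by simp
      next
        case False
        then have "\<forall>q\<ge>k. \<not> a q" using a h by (auto simp: Bn_def)
        then show ?thesis using Suc.IH a by blast
      qed
    qed
  qed
  have "m a = m (\<lambda>_. False)" if a: "a \<in> Bn n" for a
  proof -
    have "\<forall>q\<ge>n. \<not> a q" using a by (simp add: Bn_def)
    then show ?thesis using ind[of n] a by blast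
  qed
  then show ?thesis using diag by (intro exI[of _ "m (\<lambda>_. False)"]) auto
qed

lemma unit_scalar:
  assumes "circ_wf n C" "\<forall>\<psi> y. circ_sem C \<psi> y = c * \<psi> y"
  shows "cmod c = 1"
proof -
  let ?y = "\<lambda>_::nat. False"
  let ?d = "\<lambda>z. if z = ?y then (1::complex) else 0"
  have "?y \<in> Bn n" by (simp add: Bn_def)
  have n1: "nrm n ?y ?d = 1"
  proof -
    have "nrm n ?y ?d = (\<Sum>b\<in>Bn n. if b = ?y then 1 else 0)"
      unfolding nrm_def by (rule sum.cong) (auto simp: mrg_Bn[OF \<open>?y \<in> Bn n\<close>])
    then show ?thesis using \<open>?y \<in> Bn n\<close> finite_Bn by simp
  qed
  have "nrm n ?y (circ_sem C ?d) = (cmod c)\<^sup>2 * nrm n ?y ?d"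
    unfolding nrm_def using assms(2) by (simp add: norm_mult power_mult_distrib sum_distrib_left)
  then have "(cmod c)\<^sup>2 = 1" using norm_circ[OF assms(1)] n1 by simp
  then show ?thesis using norm_ge_zero[of c] by (auto simp: power2_eq_1_iff)
qed

fun invg :: "gate \<Rightarrow> gate" where
  "invg (Hgate q) = Hgate q" | "invg (Pgate q k) = Pgate q (3 * k)"
| "invg (CNOT c t) = CNOT c t" | "invg (CZ a b) = CZ a b"

lemma i_pow_4k: "\<i> ^ (3 * k) * \<i> ^ k = (1::complex)"
proof -
  have "\<i> ^ (3 * k) * \<i> ^ k = \<i> ^ (4 * k)" by (simp add: power_add[symmetric])
  also have "\<dots> = 1" by (simp add: power_mult)
  finally show ?thesis .
qed

lemma invg_sem: assumes wf: "gate_wf n g" shows "gate_sem (invg g) (gate_sem g \<psi>) = \<psi>"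
proof (cases g)
  case (Hgate q) then show ?thesis
    by (auto simp: fun_eq_iff field_simps sqrt2c fun_upd_idem)
next
  case (Pgate q k) then show ?thesis
    by (auto simp: fun_eq_iff mult.assoc[symmetric] i_pow_4k)
next
  case (CNOT c t)
  have b: "((a = (\<not> b)) = (\<not> b)) = a" for a b by auto
  show ?thesis using CNOT wf by (auto simp: fun_eq_iff b)
next
  case (CZ a b) then show ?thesis by (auto simp: fun_eq_iff)
qed

definition inv_circ :: "gate list \<Rightarrow> gate list" where "inv_circ C = rev (map invg C)"

lemma circ_sem_append: "circ_sem (A @ B) \<psi> = circ_sem B (circ_sem A \<psi>)"
  by (induction A arbitrary: \<psi>) auto

lemma inv_circ_sem: "circ_wf n C \<Longrightarrow> circ_sem (inv_circ C) (circ_sem C \<psi>) = \<psi>"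
proof (induction C arbitrary: \<psi>)
  case Nil then show ?case by (simp add: inv_circ_def)
next
  case (Cons g C)
  then have wf: "gate_wf n g" "circ_wf n C" by (auto simp: circ_wf_def)
  have "circ_sem (inv_circ (g # C)) (circ_sem (g # C) \<psi>) =
        gate_sem (invg g) (circ_sem (inv_circ C) (circ_sem C (gate_sem g \<psi>)))"
    by (simp add: inv_circ_def circ_sem_append)
  also have "\<dots> = \<psi>" using Cons.IH[OF wf(2)] invg_sem[OF wf(1)] by simp
  finally show ?case .
qed

lemma invg_wf: "gate_wf n g \<Longrightarrow> gate_wf n (invg g)" by (cases g) auto
lemma inv_circ_wf: "circ_wf n C \<Longrightarrow> circ_wf n (inv_circ C)"
  by (auto simp: circ_wf_def inv_circ_def invg_wf)

lemma pop_single: "q < n \<Longrightarrow> pop n (0, (\<lambda>_. PI)(q := a)) \<psi> = sig a q \<psi>"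
proof -
  assume q: "q < n"
  have "popL ((\<lambda>_. PI)(q := a)) [0..<n] \<psi> = sig a q (popL ((\<lambda>_. PI)(q := a)) (remove1 q [0..<n]) \<psi>)"
    using popL_pull[of q "[0..<n]"] q by simp
  also have "popL ((\<lambda>_. PI)(q := a)) (remove1 q [0..<n]) \<psi> = \<psi>"
    by (rule popL_PI) (auto simp: set_remove1_eq)
  finally have eq: "popL ((\<lambda>_. PI)(q := a)) [0..<n] \<psi> = sig a q \<psi>" .
  have "pop n (0, (\<lambda>_. PI)(q := a)) \<psi> = (\<lambda>y. \<i> ^ 0 * popL ((\<lambda>_. PI)(q := a)) [0..<n] \<psi> y)"
    by (simp only: pop_def fst_conv snd_conv)
  then show ?thesis by (simp only: eq power_0 mult_1)
qed


theorem corollary2: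
  fixes n :: nat and C :: "gate list"
  assumes "n \<ge> 2" and "circ_wf n C"
  shows "\<exists>C' c. circ_wf n C' \<and> (\<forall>g \<in> set C'. lnn_phcnot_gate g)
           \<and> two_qubit_depth C' \<le> 14 * n - 4
           \<and> cmod c = 1 \<and> (\<forall>\<psi> x. circ_sem C' \<psi> x = c * circ_sem C \<psi> x)"
proof -
  note n = assms(1) and wfC = assms(2)
  define C0 where "C0 = inv_circ C"
  have wf0: "circ_wf n C0" using inv_circ_wf[OF wfC] C0_def by simp
  define D where "D = build n C0 n"
  have okD: "\<forall>g\<in>set D. okg 0 (n - 1) g" using build_ok[of n n] D_def by blast
  have wfD: "circ_wf n D" using okl_wf[OF okD] n by simp
  have lnn: "\<forall>g\<in>set D. lnn_phcnot_gate g" using okD by (auto simp: okg_def)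
  have depth: "two_qubit_depth D \<le> 14 * n - 4"
    unfolding two_qubit_depth_def tq_run D_def gpairs_build using bp_depth[OF n] .
  have wfW: "circ_wf n (C0 @ D)" using wf0 wfD by (auto simp: circ_wf_def)
  define W where "W = circ_sem (C0 @ D)"
  have inv: "\<forall>j<n. conjc (C0 @ D) (PXq j) = PXq j \<and> conjc (C0 @ D) (PZq j) = PZq j"
    using build_inv[OF wf0, of n] D_def by simp
  have X: "W (sig PX q \<psi>) = sig PX q (W \<psi>)" if q: "q < n" for q \<psi>
  proof -
    have "sig PX q \<phi> = pop n (PXq q) \<phi>" for \<phi> using pop_single[OF q] by (simp add: PXq_def)
    then show ?thesis using pop_circ[OF wfW, of "PXq q" \<psi>] inv q by (simp add: W_def)
  qed
  have Z: "W (sig PZ q \<psi>) = sig PZ q (W \<psi>)" if q: "q < n" for q \<psi>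
  proof -
    have "sig PZ q \<phi> = pop n (PZq q) \<phi>" for \<phi> using pop_single[OF q] by (simp add: PZq_def)
    then show ?thesis using pop_circ[OF wfW, of "PZq q" \<psi>] inv q by (simp add: W_def)
  qed
  have L: "loc n W" using loc_circ[OF wfW] W_def by simp
  obtain c where c: "\<And>\<psi> y. W \<psi> y = c * \<psi> y" using scalar[OF L X Z] by blast
  have cm: "cmod c = 1" using unit_scalar[OF wfW] c W_def by simp
  have main: "circ_sem D \<psi> x = c * circ_sem C \<psi> x" for \<psi> x
  proof -
    have "circ_sem D \<psi> x = circ_sem D (circ_sem C0 (circ_sem C \<psi>)) x"
      using inv_circ_sem[OF wfC] C0_def by simp
    also have "\<dots> = W (circ_sem C \<psi>) x" by (simp add: W_def circ_sem_append)
    also have "\<dots> = c * circ_sem C \<psi> x" by (rule c)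
    finally show ?thesis .
  qed
  show ?thesis using wfD lnn depth cm main by blast
qed

end
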